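(* Let $D$ be an oriented link diagram and let $\mathfrak F(D)$ be the space of pairs (shaping $\chi$ of $D$, flattening $\mathfrak f$ of $(D,\chi)$) in which, at every non-pinched crossing, $\kappa$ is chosen to be the principal logarithm $\kappa=\frac{1}{2\pi i}\operatorname{Log}K$, topologized as a subset of $\mathbb C^{N}$ via the parameters $(\mu_j)_j,(\beta_k)_k,(\gamma_R)_R$ (which determine the shaping). Then $\mathcal V(D,\chi,\mathfrak f)$ is a continuous function on $\mathfrak F(D)$ with values in $\mathbb C/2\pi^2 i\mathbb Z$; in particular, the pinched-crossing formula is the limit of the non-pinched formula as a crossing becomes pinched.
   Context: Oriented link diagram $D$; segments are edges of its underlying $4$-valent planar graph, regions are components of the complement. At each crossing, rotate so both strands point right; label incoming upper-left segment $1$, incoming lower-left segment $2$, outgoing lower-right $1'$ (continuation of $1$), outgoing upper-right $2'$ (continuation of $2$); regions $N$ (top), $S$ (bottom), $W$ (left), $E$ (right); $\epsilon=\pm1$ the crossing sign. A shaping assigns $\chi_i=(a_i,b_i,m_i)\in(\mathbb C^\times)^3$ to segments with, at each crossing, $m_{1'}=m_1,m_{2'}=m_2$ and (positive) $A=1-\frac{m_1b_1}{b_2}(1-\frac{a_1}{m_1})(1-\frac{1}{m_2a_2})$, $a_{1'}=a_1/A$, $a_{2'}=a_2A$, $b_{1'}=\frac{m_2b_2}{m_1}(1-m_2a_2(1-\frac{b_2}{m_1b_1}))^{-1}$, $b_{2'}=b_1(1-\frac{m_1}{a_1}(1-\frac{b_2}{m_1b_1}))$, or (negative) $\tilde A=1-\frac{b_2}{m_1b_1}(1-m_1a_1)(1-\frac{m_2}{a_2})$,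 $a_{1'}=a_1/\tilde A$, $a_{2'}=a_2\tilde A$, $b_{1'}=\frac{m_2b_2}{m_1}(1-\frac{a_2}{m_2}(1-\frac{m_1b_1}{b_2}))$, $b_{2'}=b_1(1-\frac{1}{m_1a_1}(1-\frac{m_1b_1}{b_2}))^{-1}$, all finite nonzero. Pinched: $b_{2'}=b_1$. Flattening: $\mu_j$ per component ($e^{2\pi i\mu_j}=m_j$), $\beta_k$ per segment ($e^{2\pi i\beta_k}=b_k$), $\gamma_R$ per region ($e^{2\pi i(\gamma_{R'}-\gamma_R)}=a_k$ when $R',R$ lie right, left of segment $k$), $\kappa$ at each non-pinched crossing with $e^{2\pi i\kappa}=K=e^{2\pi i\gamma_N}/(1-(b_{2'}/b_1)^\epsilon)$. Lifted dilogarithm: for $w=e^{\zeta^0}\ne1$, $e^{\zeta^1}(1-w)=1$, $p^0=(\zeta^0-\operatorname{Log}w)/2\pi i$, $p^1=(\zeta^1+\operatorname{Log}(1-w))/2\pi i$, $\mathcal L(\zeta^0,\zeta^1)=\operatorname{Li}_2(w)+\frac12\operatorname{Log}w\operatorname{Log}(1-w)-\frac{\pi^2}6+\pi i(p^0\operatorname{Log}(1-w)+p^1\operatorname{Log}w)\in\mathbb C/2\pi^2\mathbb Z$ (continuous extension understood). Non-pinched crossing: $\zeta_N^0=2\pi i\epsilon(\beta_{2'}-\beta_1)$, $\zeta_N^1=2\pi i(\kappa-\gamma_N)$; $\zeta_W^0=2\pi i\epsilon(\beta_2-\beta_1-\mu_1)$, $\zeta_W^1=2\pi i(\kappa-\gamma_W+\epsilon\mu_1)$;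 $\zeta_S^0=2\pi i\epsilon(\beta_2-\beta_{1'}+\mu_2-\mu_1)$, $\zeta_S^1=2\pi i(\kappa-\gamma_S+\epsilon(\mu_1-\mu_2))$; $\zeta_E^0=2\pi i\epsilon(\beta_{2'}-\beta_{1'}+\mu_2)$, $\zeta_E^1=2\pi i(\kappa-\gamma_E-\epsilon\mu_2)$; $\mathcal V(c,\mathfrak f)=-i\epsilon[\mathcal L(\zeta_N^0,\zeta_N^1)-\mathcal L(\zeta_W^0,\zeta_W^1)+\mathcal L(\zeta_S^0,\zeta_S^1)-\mathcal L(\zeta_E^0,\zeta_E^1)]$. Pinched crossing: $\mathcal V(c,\mathfrak f)=2\pi^2 i[\beta_1(\gamma_W-\gamma_N)-\beta_{1'}(\gamma_S-\gamma_E)+\beta_2(\gamma_S-\gamma_W)-\beta_{2'}(\gamma_E-\gamma_N)-\mu_1(\epsilon(\beta_1-\beta_{1'}+\mu_2)+\gamma_S-\gamma_W)-\mu_2(\epsilon(\beta_{2'}-\beta_2+\mu_1)+\gamma_E-\gamma_S)]$. Diagram volume $\mathcal V(D,\chi,\mathfrak f)=\sum_c\mathcal V(c,\mathfrak f)\in\mathbb C/2\pi^2 i\mathbb Z$. *)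

theory Defs
  imports "HOL-Analysis.Analysis"
begin

text \<open>At each crossing c (rotated so that both strands point right):
  seg1 c  = incoming upper-left segment (label 1),
  seg2 c  = incoming lower-left segment (label 2),
  seg1' c = outgoing lower-right segment (label 1', continuation of 1),
  seg2' c = outgoing upper-right segment (label 2', continuation of 2),
  regN, regS, regW, regE the four adjacent regions, sgn c the crossing sign.
  comp k is the link component of segment k; lreg k / rreg k are the regions
  lying to the left / right of segment k (w.r.t. its orientation).\<close>

record ('c, 's, 'r, 'j) diagram =
  crossings :: "'c set"
  seg1  :: "'c \<Rightarrow> 's"
  seg2  :: "'c \<Rightarrow> 's"
  seg1' :: "'c \<Rightarrow> 's"
  seg2' :: "'c \<Rightarrow> 's"
  regN :: "'c \<Rightarrow> 'r"
  regS :: "'c \<Rightarrow> 'r"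
  regW :: "'c \<Rightarrow> 'r"
  regE :: "'c \<Rightarrow> 'r"
  sgn  :: "'c \<Rightarrow> int"
  comp :: "'s \<Rightarrow> 'j"
  lreg :: "'s \<Rightarrow> 'r"
  rreg :: "'s \<Rightarrow> 'r"

definition link_diagram :: "('c, 's, 'r, 'j) diagram \<Rightarrow> bool" where
  "link_diagram D \<longleftrightarrow> finite (crossings D) \<and>
     (\<forall>c\<in>crossings D.
        (sgn D c = 1 \<or> sgn D c = -1) \<and>
        comp D (seg1' D c) = comp D (seg1 D c) \<and>
        comp D (seg2' D c) = comp D (seg2 D c) \<and>
        lreg D (seg1 D c) = regN D c \<and> rreg D (seg1 D c) = regW D c \<and>
        lreg D (seg2 D c) = regW D c \<and> rreg D (seg2 D c) = regS D c \<and>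
        lreg D (seg1' D c) = regE D c \<and> rreg D (seg1' D c) = regS D c \<and>
        lreg D (seg2' D c) = regN D c \<and> rreg D (seg2' D c) = regE D c)"

text \<open>A parameter point is (mu, beta, gamma): mu per component, beta per segment,
  gamma per region.\<close>
type_synonym ('s, 'r, 'j) params = "('j \<Rightarrow> complex) \<times> ('s \<Rightarrow> complex) \<times> ('r \<Rightarrow> complex)"

definition e2pi :: "complex \<Rightarrow> complex" where
  "e2pi z = exp (2 * of_real pi * \<i> * z)"

definition shp_m :: "('c, 's, 'r, 'j) diagram \<Rightarrow> ('s, 'r, 'j) params \<Rightarrow> 's \<Rightarrow> complex" where
  "shp_m D p k = e2pi (fst p (comp D k))"

definition shp_b :: "('s, 'r, 'j) params \<Rightarrow> 's \<Rightarrow> complex" where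
  "shp_b p k = e2pi (fst (snd p) k)"

definition shp_a :: "('c, 's, 'r, 'j) diagram \<Rightarrow> ('s, 'r, 'j) params \<Rightarrow> 's \<Rightarrow> complex" where
  "shp_a D p k = e2pi (snd (snd p) (rreg D k) - snd (snd p) (lreg D k))"

text \<open>The shaping equations at a crossing (all quantities finite and nonzero; the
  exponential parameters are automatically nonzero, so finiteness/nonvanishing
  amounts to the nonvanishing of the displayed denominators / factors).\<close>
definition shaping_at :: "('c, 's, 'r, 'j) diagram \<Rightarrow> ('s, 'r, 'j) params \<Rightarrow> 'c \<Rightarrow> bool" where
  "shaping_at D p c \<longleftrightarrow>
    (let m1 = shp_m D p (seg1 D c); m2 = shp_m D p (seg2 D c);
         a1 = shp_a D p (seg1 D c); a2 = shp_a D p (seg2 D c);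
         b1 = shp_b p (seg1 D c); b2 = shp_b p (seg2 D c);
         a1' = shp_a D p (seg1' D c); a2' = shp_a D p (seg2' D c);
         b1' = shp_b p (seg1' D c); b2' = shp_b p (seg2' D c)
     in if sgn D c = 1 then
          (let A = 1 - m1 * b1 / b2 * (1 - a1 / m1) * (1 - 1 / (m2 * a2));
               Q = 1 - m2 * a2 * (1 - b2 / (m1 * b1))
           in A \<noteq> 0 \<and> Q \<noteq> 0 \<and> a1' = a1 / A \<and> a2' = a2 * A \<and>
              b1' = m2 * b2 / m1 / Q \<and>
              b2' = b1 * (1 - m1 / a1 * (1 - b2 / (m1 * b1))))
        else
          (let At = 1 - b2 / (m1 * b1) * (1 - m1 * a1) * (1 - m2 / a2);
               Q = 1 - 1 / (m1 * a1) * (1 - m1 * b1 / b2)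
           in At \<noteq> 0 \<and> Q \<noteq> 0 \<and> a1' = a1 / At \<and> a2' = a2 * At \<and>
              b1' = m2 * b2 / m1 * (1 - a2 / m2 * (1 - m1 * b1 / b2)) \<and>
              b2' = b1 / Q))"

definition flat_space :: "('c, 's, 'r, 'j) diagram \<Rightarrow> ('s, 'r, 'j) params set" where
  "flat_space D = {p. \<forall>c\<in>crossings D. shaping_at D p c}"

text \<open>Principal dilogarithm Li2(w) = - int_0^w Log(1-t)/t dt along the segment [0,w],
  with the principal logarithm (on the cut the value is the boundary value matching
  the principal Log(1-w)).\<close>
definition Li2 :: "complex \<Rightarrow> complex" where
  "Li2 w = - integral {0..1::real} (\<lambda>t. Ln (1 - of_real t * w) / of_real t)"

definition lifted_dilog :: "complex \<Rightarrow> complex \<Rightarrow> complex" where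
  "lifted_dilog z0 z1 =
     (let w = exp z0;
          p0 = (z0 - Ln w) / (2 * of_real pi * \<i>);
          p1 = (z1 + Ln (1 - w)) / (2 * of_real pi * \<i>)
      in Li2 w + Ln w * Ln (1 - w) / 2 - of_real (pi^2) / 6
         + of_real pi * \<i> * (p0 * Ln (1 - w) + p1 * Ln w))"

definition pinched :: "('c, 's, 'r, 'j) diagram \<Rightarrow> ('s, 'r, 'j) params \<Rightarrow> 'c \<Rightarrow> bool" where
  "pinched D p c \<longleftrightarrow> shp_b p (seg2' D c) = shp_b p (seg1 D c)"

definition crossing_vol :: "('c, 's, 'r, 'j) diagram \<Rightarrow> ('s, 'r, 'j) params \<Rightarrow> 'c \<Rightarrow> complex" where
  "crossing_vol D p c =
    (let mu = fst p; beta = fst (snd p); gamma = snd (snd p);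
         \<epsilon> = of_int (sgn D c) :: complex;
         tpi = 2 * of_real pi * \<i>;
         mu1 = mu (comp D (seg1 D c)); mu2 = mu (comp D (seg2 D c));
         be1 = beta (seg1 D c); be2 = beta (seg2 D c);
         be1' = beta (seg1' D c); be2' = beta (seg2' D c);
         gN = gamma (regN D c); gS = gamma (regS D c);
         gW = gamma (regW D c); gE = gamma (regE D c)
     in if pinched D p c then
          2 * of_real (pi^2) * \<i> *
            (be1 * (gW - gN) - be1' * (gS - gE) + be2 * (gS - gW) - be2' * (gE - gN)
             - mu1 * (\<epsilon> * (be1 - be1' + mu2) + gS - gW)
             - mu2 * (\<epsilon> * (be2' - be2 + mu1) + gE - gS))
        else
          (let K = e2pi gN / (1 - (shp_b p (seg2' D c) / shp_b p (seg1 D c)) powi sgn D c);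
               \<kappa> = Ln K / tpi
           in - \<i> * \<epsilon> *
              (lifted_dilog (tpi * \<epsilon> * (be2' - be1)) (tpi * (\<kappa> - gN))
               - lifted_dilog (tpi * \<epsilon> * (be2 - be1 - mu1)) (tpi * (\<kappa> - gW + \<epsilon> * mu1))
               + lifted_dilog (tpi * \<epsilon> * (be2 - be1' + mu2 - mu1)) (tpi * (\<kappa> - gS + \<epsilon> * (mu1 - mu2)))
               - lifted_dilog (tpi * \<epsilon> * (be2' - be1' + mu2)) (tpi * (\<kappa> - gE - \<epsilon> * mu2)))))"

definition diagram_vol :: "('c, 's, 'r, 'j) diagram \<Rightarrow> ('s, 'r, 'j) params \<Rightarrow> complex" where
  "diagram_vol D p = (\<Sum>c\<in>crossings D. crossing_vol D p c)"

text \<open>f : S \<rightarrow> C, viewed as a map S \<rightarrow> C/PZ, is continuous (quotient topology).\<close>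
definition continuous_mod_on :: "complex \<Rightarrow> 'a::topological_space set \<Rightarrow> ('a \<Rightarrow> complex) \<Rightarrow> bool" where
  "continuous_mod_on P S f \<longleftrightarrow>
     (\<forall>x\<in>S. \<forall>e>0. \<forall>\<^sub>F y in at x within S. \<exists>n::int. cmod (f y - f x - of_int n * P) < e)"

end

theory Submission
  imports Defs "HOL-Complex_Analysis.Complex_Analysis"
begin

definition Om1 :: "complex set" where "Om1 = - {z. Im z = 0 \<and> 1 \<le> Re z}"

lemma open_Om1: "open Om1"
  unfolding Om1_def
  by (intro open_Compl closed_Collect_conj closed_Collect_eq closed_Collect_le continuous_intros)

lemma Om1_iff: "z \<in> Om1 \<longleftrightarrow> \<not> (Im z = 0 \<and> 1 \<le> Re z)"
  by (simp add: Om1_def)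

lemma Om1_ln: "z \<in> Om1 \<Longrightarrow> 1 - z \<notin> \<real>\<^sub>\<le>\<^sub>0"
  by (auto simp: Om1_iff complex_nonpos_Reals_iff)

definition f0 :: "complex \<Rightarrow> complex" where
  "f0 z = (if z = 0 then -1 else Ln (1 - z) / z)"

lemma deriv_Ln1m: "deriv (\<lambda>z. Ln (1 - z)) 0 = -1"
proof -
  have "((\<lambda>z. Ln (1 - z)) has_field_derivative (inverse (1 - 0) * (-1))) (at (0::complex))"
    by (rule DERIV_chain2[where f=Ln]) (auto intro!: derivative_eq_intros simp: complex_nonpos_Reals_iff)
  then show ?thesis by (simp add: DERIV_imp_deriv)
qed

lemma hol_f0: "f0 holomorphic_on Om1"
proof -
  have "(\<lambda>z. Ln (1 - z)) holomorphic_on Om1"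
    using Om1_ln by (intro holomorphic_intros) auto
  then have "(\<lambda>z. if z = 0 then deriv (\<lambda>z. Ln (1 - z)) 0 else (Ln (1 - z) - Ln (1 - 0)) / (z - 0)) holomorphic_on Om1"
    by (rule pole_lemma_open[OF _ open_Om1])
  then show ?thesis
    by (rule holomorphic_transform) (simp add: f0_def deriv_Ln1m)
qed

lemma cont_f0: "continuous_on Om1 f0"
  using hol_f0 holomorphic_on_imp_continuous_on by blast

lemma seg_Om1: "x \<in> Om1 \<Longrightarrow> closed_segment 0 x \<subseteq> Om1"
proof
  fix y assume x: "x \<in> Om1" and "y \<in> closed_segment 0 x"
  then obtain u where u: "0 \<le> u" "u \<le> 1" "y = u *\<^sub>R x"
    by (auto simp: closed_segment_def)
  show "y \<in> Om1"
  proof (cases "u = 0")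
    case True then show ?thesis using u by (simp add: Om1_iff)
  next
    case False
    then have "u > 0" using u by simp
    have "1 \<le> Re x" if "1 \<le> u * Re x"
    proof (cases "Re x \<ge> 0")
      case True
      then have "u * Re x \<le> Re x" using mult_left_le_one_le[of "Re x" u] u by simp
      then show ?thesis using that by simp
    next
      case False
      then have "u * Re x \<le> 0" using u by (simp add: mult_nonneg_nonpos)
      then show ?thesis using that by simp
    qed
    then show ?thesis using x u \<open>u > 0\<close> by (auto simp: Om1_iff)
  qed
qed

lemma starlike_Om1: "starlike Om1"
  unfolding starlike_def using seg_Om1 by (intro bexI[of _ 0]) (auto simp: Om1_iff)

lemma Li2_contour: "Li2 w = - contour_integral (linepath 0 w) f0"
proof -
  have "contour_integral (linepath 0 w) f0 = integral {0..1} (\<lambda>t. f0 (linepath 0 w t) * w)"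
    by (simp add: contour_integral_integral)
  also have "\<dots> = integral {0..1} (\<lambda>t. Ln (1 - of_real t * w) / of_real t)"
  proof (rule integral_spike[of "{0}"])
    fix t assume "t \<in> {0..1::real} - {0}"
    then show "Ln (1 - of_real t * w) / of_real t = f0 (linepath 0 w t) * w"
      by (cases "w = 0") (auto simp: f0_def linepath_def scaleR_conv_of_real)
  qed auto
  finally show ?thesis by (simp add: Li2_def)
qed

lemma Li2_deriv: "w \<in> Om1 \<Longrightarrow> (Li2 has_field_derivative (- f0 w)) (at w)"
proof -
  have "\<exists>g. \<forall>x\<in>Om1. (g has_field_derivative f0 x) (at x)"
    by (rule holomorphic_starlike_primitive[OF cont_f0 starlike_Om1 open_Om1, of "{}"])
      (use hol_f0 open_Om1 holomorphic_on_imp_differentiable_at in auto)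
  then obtain G where G: "\<And>x. x \<in> Om1 \<Longrightarrow> (G has_field_derivative f0 x) (at x)"
    by blast
  have eq: "Li2 x = G 0 - G x" if "x \<in> Om1" for x
  proof -
    have seg: "closed_segment 0 x \<subseteq> Om1" using seg_Om1 that by blast
    have "(f0 has_contour_integral (G (pathfinish (linepath 0 x)) - G (pathstart (linepath 0 x)))) (linepath 0 x)"
      apply (rule contour_integral_primitive[of Om1, OF _ valid_path_linepath])
      using G has_field_derivative_at_within apply blast
      unfolding path_image_linepath by (rule seg)
    then have "(f0 has_contour_integral (G x - G 0)) (linepath 0 x)" by simp
    then show ?thesis by (simp add: Li2_contour contour_integral_unique)
  qed
  assume w: "w \<in> Om1"
  have "((\<lambda>x. G 0 - G x) has_field_derivative (- f0 w)) (at w)"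
    using G[OF w] by (auto intro!: derivative_eq_intros)
  then show ?thesis
    by (rule has_field_derivative_transform_within_open[OF _ open_Om1 w]) (use eq in auto)
qed

definition Vs :: "complex set" where "Vs = - \<real>\<^sub>\<le>\<^sub>0"

lemma Vs_iff: "z \<in> Vs \<longleftrightarrow> \<not> (Re z \<le> 0 \<and> Im z = 0)"
  by (simp add: Vs_def complex_nonpos_Reals_iff)

lemma open_Vs: "open Vs"
  by (simp add: Vs_def open_Compl)

lemma starlike_Vs: "starlike Vs"
  unfolding starlike_def
proof (intro bexI[of _ 1] ballI subsetI)
  show "1 \<in> Vs" by (simp add: Vs_iff)
  fix x y assume x: "x \<in> Vs" and "y \<in> closed_segment 1 x"
  then obtain u where u: "0 \<le> u" "u \<le> 1" "y = (1 - u) *\<^sub>R 1 + u *\<^sub>R x"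
    by (auto simp: closed_segment_def)
  have Re: "Re y = (1 - u) + u * Re x" and Im: "Im y = u * Im x" using u by auto
  show "y \<in> Vs"
  proof (cases "Im x = 0")
    case True
    then have "Re x > 0" using x by (auto simp: Vs_iff)
    have "Re y > 0"
    proof (cases "u = 1")
      case True then show ?thesis using \<open>Re x > 0\<close> Re by simp
    next
      case False
      then have "1 - u > 0" using u by simp
      moreover have "u * Re x \<ge> 0" using u \<open>Re x > 0\<close> by simp
      ultimately show ?thesis using Re by linarith
    qed
    then show ?thesis by (simp add: Vs_iff)
  next
    case False
    show ?thesis
    proof (cases "u = 0")
      case True then show ?thesis using Re by (simp add: Vs_iff)
    next
      case False
      then show ?thesis using \<open>Im x \<noteq> 0\<close> Im by (simp add: Vs_iff)
    qed
  qed
qed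

definition kf :: "complex \<Rightarrow> complex" where
  "kf z = (if z = 1 then deriv Ln 1 else (Ln z - Ln 1) / (z - 1))"

lemma hol_kf: "kf holomorphic_on Vs"
  unfolding kf_def
  by (rule pole_lemma_open[OF _ open_Vs]) (intro holomorphic_intros, auto simp: Vs_def)

definition Om :: "complex set" where "Om = Vs \<inter> Om1"

lemma open_Om: "open Om" by (simp add: Om_def open_Vs open_Om1 open_Int)

lemma connected_Om: "connected Om"
proof (rule starlike_imp_connected)
  show "starlike Om"
    unfolding starlike_def
  proof (intro bexI[of _ "1/2"] ballI subsetI)
    show "1/2 \<in> Om" by (simp add: Om_def Vs_iff Om1_iff)
    fix x y assume x: "x \<in> Om" and "y \<in> closed_segment (1/2) x"
    then obtain u where u: "0 \<le> u" "u \<le> 1" "y = (1 - u) *\<^sub>R (1/2) + u *\<^sub>R x"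
      by (auto simp: closed_segment_def)
    have Re: "Re y = (1 - u)/2 + u * Re x" and Im: "Im y = u * Im x" using u by auto
    show "y \<in> Om"
    proof (cases "Im x = 0")
      case True
      then have "Re x > 0" "Re x < 1" using x by (auto simp: Vs_iff Om1_iff Om_def)
      have "Re y > 0"
      proof (cases "u = 1")
        case True then show ?thesis using \<open>Re x > 0\<close> Re by simp
      next
        case False
        then have "(1 - u)/2 > 0" using u by simp
        moreover have "u * Re x \<ge> 0" using u \<open>Re x > 0\<close> by simp
        ultimately show ?thesis using Re by linarith
      qed
      moreover have "Re y < 1"
      proof (cases "u = 0")
        case True then show ?thesis unfolding Re by simp
      next
        case False
        then have "u * Re x < u * 1" using u \<open>Re x < 1\<close> by (intro mult_strict_left_mono) auto
        then have "(1 - u) / 2 + u * Re x < (1 - u) / 2 + u" by simp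
        also have "\<dots> \<le> 1" using u by (simp add: field_simps)
        finally show ?thesis unfolding Re .
      qed
      ultimately show ?thesis by (simp add: Vs_iff Om1_iff Om_def)
    next
      case False
      show ?thesis
      proof (cases "u = 0")
        case True then show ?thesis using Re by (simp add: Vs_iff Om1_iff Om_def)
      next
        case False
        then show ?thesis using \<open>Im x \<noteq> 0\<close> Im by (simp add: Vs_iff Om1_iff Om_def)
      qed
    qed
  qed
qed

lemma Li2_H: "\<exists>H c. continuous_on Vs H \<and> (\<forall>w\<in>Om. Li2 w = H w + c - Ln w * Ln (1 - w))"
proof -
  have "\<exists>g. \<forall>x\<in>Vs. (g has_field_derivative kf x) (at x)"
    by (rule holomorphic_starlike_primitive[OF holomorphic_on_imp_continuous_on[OF hol_kf] starlike_Vs open_Vs, of "{}"])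
      (use hol_kf open_Vs holomorphic_on_imp_differentiable_at in auto)
  then obtain H where H: "\<And>x. x \<in> Vs \<Longrightarrow> (H has_field_derivative kf x) (at x)"
    by blast
  have contH: "continuous_on Vs H"
    using H by (meson DERIV_isCont continuous_at_imp_continuous_on)
  define F where "F w = Li2 w + Ln w * Ln (1 - w) - H w" for w
  have dF: "(F has_field_derivative 0) (at w)" if w: "w \<in> Om" for w
  proof -
    have wV: "w \<in> Vs" and w1: "w \<in> Om1" using w by (auto simp: Om_def)
    have w0: "w \<noteq> 0" using wV by (auto simp: Vs_iff)
    have w1': "w \<noteq> 1" using w1 by (auto simp: Om1_iff)
    have l1: "w \<notin> \<real>\<^sub>\<le>\<^sub>0" using wV by (simp add: Vs_def)
    have l2: "1 - w \<notin> \<real>\<^sub>\<le>\<^sub>0" using Om1_ln[OF w1] .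
    have d2: "((\<lambda>w. Ln (1 - w)) has_field_derivative (inverse (1 - w) * (-1))) (at w)"
      by (rule DERIV_chain2[where f=Ln and g="\<lambda>w. 1 - w", OF has_field_derivative_Ln[OF l2]]) (auto intro!: derivative_eq_intros)
    have "(F has_field_derivative (- f0 w + (inverse w * Ln (1 - w) + (inverse (1 - w) * (-1)) * Ln w) - kf w)) (at w)"
      unfolding F_def
      by (intro DERIV_diff DERIV_add DERIV_mult Li2_deriv[OF w1] has_field_derivative_Ln[OF l1] d2 H[OF wV])
    moreover have "- f0 w + (inverse w * Ln (1 - w) + (inverse (1 - w) * (-1)) * Ln w) - kf w = 0"
      using w0 w1' by (simp add: f0_def kf_def field_simps)
    ultimately show ?thesis by simp
  qed
  have "continuous_on Om F"
    using dF by (meson DERIV_isCont continuous_at_imp_continuous_on)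
  then obtain c where c: "\<And>x. x \<in> Om \<Longrightarrow> F x = c"
    using DERIV_zero_connected_constant[OF connected_Om open_Om finite.emptyI, of F] dF by auto
  show ?thesis
    by (intro exI[of _ H] exI[of _ c] conjI contH ballI) (use c in \<open>auto simp: F_def algebra_simps\<close>)
qed

lemma mln_le_sqrt: "0 < (v::real) \<Longrightarrow> - ln v \<le> 2 / sqrt v"
proof -
  assume v: "0 < v"
  have "ln (1 / sqrt v) \<le> 1 / sqrt v - 1" using v by (intro ln_le_minus_one) simp
  moreover have "ln (1 / sqrt v) = - ln v / 2" using v by (simp add: ln_div ln_sqrt)
  ultimately show ?thesis by (simp add: field_simps)
qed

lemma ln_bound: assumes "0 < v" "v \<le> U" "U \<le> B" "1 \<le> B"
  shows "\<bar>ln U\<bar> \<le> ln B + 2 / sqrt v"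
proof (cases "U \<ge> 1")
  case True
  then have "ln U \<le> ln B" using assms by simp
  moreover have "ln U \<ge> 0" using True by simp
  moreover have "2 / sqrt v \<ge> 0" using assms by simp
  ultimately show ?thesis by linarith
next
  case False
  have "ln v \<le> ln U" using assms by simp
  then have "\<bar>ln U\<bar> \<le> - ln v" using False assms by simp
  also have "\<dots> \<le> 2 / sqrt v" using mln_le_sqrt assms by simp
  moreover have "ln B \<ge> 0" using assms by simp
  ultimately show ?thesis by linarith
qed

lemma Ln_lim_upper:
  assumes z: "(z \<longlongrightarrow> r) F" and r: "Im r = 0" "Re r < 0"
    and ev: "eventually (\<lambda>n. Im (z n) > 0) F"
  shows "((\<lambda>n. Ln (z n)) \<longlongrightarrow> Ln r) F"
proof -
  have r0: "r \<noteq> 0" using r by auto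
  have eqr: "Ln r = Ln (- r) + \<i> * pi"
    using Ln_minus[of "- r"] r r0 by simp
  have eqz: "Ln (z n) = Ln (- z n) + \<i> * pi" if "Im (z n) > 0" for n
  proof -
    have "z n \<noteq> 0" using that by auto
    then show ?thesis using Ln_minus[of "- z n"] that by (auto split: if_splits)
  qed
  have "-r \<notin> \<real>\<^sub>\<le>\<^sub>0" using r by (simp add: complex_nonpos_Reals_iff)
  then have "((\<lambda>n. Ln (- z n)) \<longlongrightarrow> Ln (- r)) F"
    by (intro isCont_tendsto_compose[OF continuous_at_Ln] tendsto_minus z)
  then have "((\<lambda>n. Ln (- z n) + \<i> * pi) \<longlongrightarrow> Ln r) F"
    unfolding eqr by (intro tendsto_add) auto
  then show ?thesis
    by (rule Lim_transform_eventually) (use ev eqz in \<open>auto elim!: eventually_mono\<close>)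
qed

lemma Ln_lim_real:
  assumes z: "(z \<longlongrightarrow> r) F" and r: "Im r = 0" "Re r \<noteq> 0"
    and ev: "eventually (\<lambda>n. Im (z n) > 0) F"
  shows "((\<lambda>n. Ln (z n)) \<longlongrightarrow> Ln r) F"
proof (cases "Re r < 0")
  case True then show ?thesis using Ln_lim_upper[OF z r(1) True ev] by simp
next
  case False
  then have "r \<notin> \<real>\<^sub>\<le>\<^sub>0" using r by (auto simp: complex_nonpos_Reals_iff)
  then show ?thesis by (intro isCont_tendsto_compose[OF continuous_at_Ln] z)
qed

lemma rho_integrable:
  fixes a :: real assumes a: "a > 1"
  shows "(\<lambda>t. 1 / sqrt \<bar>1 - t * a\<bar>) integrable_on {0..1}"
proof -
  have a0: "a > 0" using a by simp
  have ia: "0 \<le> 1/a" "1/a \<le> 1" using a by (auto simp: field_simps)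
  define G1 where "G1 t = - 2 * sqrt (1 - t * a) / a" for t
  define G2 where "G2 t = 2 * sqrt (t * a - 1) / a" for t
  have i1: "((\<lambda>t. 1 / sqrt \<bar>1 - t * a\<bar>) has_integral (G1 (1/a) - G1 0)) {0..1/a}"
  proof (rule fundamental_theorem_of_calculus_interior[OF ia(1)])
    show "continuous_on {0..1/a} G1" unfolding G1_def using a0 by (intro continuous_intros) auto
    fix x assume x: "x \<in> {0<..<1/a}"
    then have pos: "1 - x * a > 0" using a0 by (auto simp: field_simps)
    have d: "((\<lambda>t. sqrt (1 - t * a)) has_real_derivative (inverse (sqrt (1 - x * a)) / 2 * (0 - 1 * a))) (at x)"
      by (rule DERIV_chain2[where f=sqrt and g="\<lambda>t. 1 - t * a", OF DERIV_real_sqrt[OF pos]]) (auto intro!: derivative_eq_intros)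
    have "(G1 has_real_derivative (- 2 * (inverse (sqrt (1 - x * a)) / 2 * (0 - 1 * a)) / a)) (at x)"
      unfolding G1_def by (rule DERIV_cdivide[OF DERIV_cmult[OF d]])
    moreover have "- 2 * (inverse (sqrt (1 - x * a)) / 2 * (0 - 1 * a)) / a = 1 / sqrt \<bar>1 - x * a\<bar>"
      using pos a0 by (simp add: field_simps)
    ultimately show "(G1 has_vector_derivative 1 / sqrt \<bar>1 - x * a\<bar>) (at x)"
      by (simp add: has_real_derivative_iff_has_vector_derivative)
  qed
  have i2: "((\<lambda>t. 1 / sqrt \<bar>1 - t * a\<bar>) has_integral (G2 1 - G2 (1/a))) {1/a..1}"
  proof (rule fundamental_theorem_of_calculus_interior[OF ia(2)])
    show "continuous_on {1/a..1} G2" unfolding G2_def using a0 by (intro continuous_intros) auto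
    fix x assume x: "x \<in> {1/a<..<1}"
    then have pos: "x * a - 1 > 0" using a0 by (auto simp: field_simps)
    have d: "((\<lambda>t. sqrt (t * a - 1)) has_real_derivative (inverse (sqrt (x * a - 1)) / 2 * (1 * a - 0))) (at x)"
      by (rule DERIV_chain2[where f=sqrt and g="\<lambda>t. t * a - 1", OF DERIV_real_sqrt[OF pos]]) (auto intro!: derivative_eq_intros)
    have "(G2 has_real_derivative (2 * (inverse (sqrt (x * a - 1)) / 2 * (1 * a - 0)) / a)) (at x)"
      unfolding G2_def by (rule DERIV_cdivide[OF DERIV_cmult[OF d]])
    moreover have "2 * (inverse (sqrt (x * a - 1)) / 2 * (1 * a - 0)) / a = 1 / sqrt \<bar>1 - x * a\<bar>"
      using pos a0 by (simp add: field_simps abs_minus_commute)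
    ultimately show "(G2 has_vector_derivative 1 / sqrt \<bar>1 - x * a\<bar>) (at x)"
      by (simp add: has_real_derivative_iff_has_vector_derivative)
  qed
  show ?thesis using has_integral_combine[OF ia i1 i2] by blast
qed

lemma wseq_lim: "(\<lambda>n. complex_of_real a - \<i> * complex_of_real (inverse (real (Suc n)))) \<longlonglongrightarrow> complex_of_real a"
proof -
  have l0: "(\<lambda>n. complex_of_real (inverse (real (Suc n)))) \<longlonglongrightarrow> 0"
    using tendsto_of_real[OF LIMSEQ_inverse_real_of_nat, where 'a=complex] by simp
  have "(\<lambda>n. complex_of_real a - \<i> * complex_of_real (inverse (real (Suc n)))) \<longlonglongrightarrow> complex_of_real a - \<i> * 0"
    by (intro tendsto_intros l0)
  then show ?thesis by simp
qed

lemma Li2_cut_lim: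
  fixes a :: real assumes a: "a > 1"
  shows "(\<lambda>n. Li2 (complex_of_real a - \<i> * complex_of_real (inverse (real (Suc n))))) \<longlonglongrightarrow> Li2 (complex_of_real a)"
proof -
  define w where "w n = complex_of_real a - \<i> * complex_of_real (inverse (real (Suc n)))" for n
  define M where "M = a + 1"
  define S where "S = {0<..1::real} - {1/a}"
  define \<phi> where "\<phi> n t = Ln (1 - of_real t * w n) / of_real t" for n t
  define \<psi> where "\<psi> t = Ln (1 - of_real t * complex_of_real a) / of_real t" for t
  define h where "h t = 2*M + 2*M*(pi + ln (1+M)) + 4*M * (1 / sqrt \<bar>1 - t*a\<bar>)" for t
  have a0: "a > 0" and M1: "M \<ge> 1" using a by (auto simp: M_def)
  have ReIm: "Re (complex_of_real a - \<i> * complex_of_real r) = a"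
     "Im (complex_of_real a - \<i> * complex_of_real r) = - r" for r
    by simp_all
  have Rew: "Re (w n) = a" and Imw: "Im (w n) = - inverse (real (Suc n))" for n
    unfolding w_def by (rule ReIm)+
  have wnorm: "cmod (w n) \<le> M" for n
  proof -
    have "cmod (w n) \<le> cmod (complex_of_real a) + cmod (\<i> * complex_of_real (inverse (real (Suc n))))"
      unfolding w_def by (rule norm_triangle_ineq4)
    also have "\<dots> = a + \<bar>inverse (real (Suc n))\<bar>" using a0 by (simp only: norm_mult norm_of_real norm_ii)
    also have "\<dots> \<le> a + 1" by (simp add: inverse_le_1_iff del: of_nat_Suc)
    finally show ?thesis by (simp add: M_def)
  qed
  have w0: "w n \<noteq> 0" for n using Rew[of n] a0 by auto
  have SS: "S \<subseteq> {0..1}" by (auto simp: S_def)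
  have negl: "negligible {x \<in> {0..1} - S. f x \<noteq> 0}" "negligible {x \<in> S - {0..1}. f x \<noteq> 0}"
    for f :: "real \<Rightarrow> 'b::real_normed_vector"
  proof -
    show "negligible {x \<in> {0..1} - S. f x \<noteq> 0}"
      by (rule negligible_subset[of "{0, 1/a}"]) (auto simp: S_def)
    show "negligible {x \<in> S - {0..1}. f x \<noteq> 0}"
      by (rule negligible_subset[of "{}"]) (use SS in auto)
  qed
  have intS: "g integrable_on S" if "g integrable_on {0..1}" for g :: "real \<Rightarrow> complex"
    by (rule integrable_spike_set[OF that negl])
  have intS': "g integrable_on S" if "g integrable_on {0..1}" for g :: "real \<Rightarrow> real"
    by (rule integrable_spike_set[OF that negl])
  have iS: "integral {0..1} g = integral S g" for g :: "real \<Rightarrow> complex"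
    by (rule integral_spike_set[OF negl])
  have int_phi: "\<phi> n integrable_on S" for n
  proof -
    have sub: "(\<lambda>t. of_real t * w n) ` {0..1} \<subseteq> Om1"
    proof
      fix y assume "y \<in> (\<lambda>t. of_real t * w n) ` {0..1}"
      then obtain t where t: "t \<in> {0..1}" "y = of_real t * w n" by auto
      show "y \<in> Om1"
      proof (cases "t = 0")
        case True then show ?thesis using t by (simp add: Om1_iff)
      next
        case False then show ?thesis using t Imw[of n] by (simp add: Om1_iff)
      qed
    qed
    have "continuous_on {0..1} (\<lambda>t. f0 (of_real t * w n) * w n)"
      by (intro continuous_on_mult continuous_on_const continuous_on_compose2[OF cont_f0 _ sub] continuous_intros)
    then have "(\<lambda>t. f0 (of_real t * w n) * w n) integrable_on {0..1}"
      by (rule integrable_continuous_interval)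
    then have "\<phi> n integrable_on {0..1}"
    proof (rule integrable_spike[of _ _ "{0}"])
      fix t assume "t \<in> {0..1::real} - {0}"
      then show "\<phi> n t = f0 (of_real t * w n) * w n"
        using w0[of n] by (auto simp: \<phi>_def f0_def)
    qed auto
    then show ?thesis by (rule intS)
  qed
  have int_h: "h integrable_on S"
  proof -
    have "(\<lambda>t. 2*M + 2*M*(pi + ln (1+M)) + 4*M * (1 / sqrt \<bar>1 - t*a\<bar>)) integrable_on {0..1}"
      by (intro integrable_add integrable_const_ivl integrable_on_mult_right rho_integrable[OF a])
    then show ?thesis unfolding h_def by (rule intS')
  qed
  have bound: "norm (\<phi> n t) \<le> h t" if t: "t \<in> S" for n t
  proof -
    have t0: "0 < t" "t \<le> 1" "t \<noteq> 1/a" using t by (auto simp: S_def)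
    define z where "z = of_real t * w n"
    have nz: "cmod z \<le> t * M" using wnorm[of n] t0 by (simp add: z_def norm_mult mult_left_mono)
    have v0: "\<bar>1 - t * a\<bar> > 0" using t0 a0 by (auto simp: field_simps)
    have hge: "h t \<ge> 2 * M + 2*M*(pi + ln (1+M)) + 4*M * (1 / sqrt \<bar>1 - t*a\<bar>)" by (simp add: h_def)
    have pos1: "2*M*(pi + ln (1+M)) \<ge> 0" "4*M * (1 / sqrt \<bar>1 - t*a\<bar>) \<ge> 0"
      using M1 pi_gt_zero by auto
    show ?thesis
    proof (cases "cmod z \<le> 1/2")
      case True
      have "norm (ln (1 + (-z)) - (-z)) \<le> norm (-z)^2 / (1 - norm (-z))"
        by (rule Ln_approx_linear) (use True in simp)
      moreover have "norm z^2 / (1 - norm z) \<le> norm z"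
      proof -
        have "norm z * (norm z * 2) \<le> norm z" using True by (intro mult_left_le) auto
        then show ?thesis using True by (simp add: power2_eq_square field_simps)
      qed
      ultimately have "norm (Ln (1 - z) + z) \<le> norm z" by simp
      then have "norm (Ln (1 - z)) \<le> 2 * norm z"
        using norm_triangle_ineq4[of "Ln (1 - z) + z" z] by simp
      also have "\<dots> \<le> 2 * (t * M)" using nz by simp
      finally have "norm (\<phi> n t) \<le> 2 * M"
        using t0 by (simp add: \<phi>_def z_def norm_divide field_simps)
      then show ?thesis using hge pos1 by linarith
    next
      case False
      then have tM: "1 / t \<le> 2 * M" using nz t0 by (simp add: field_simps)
      have Im1: "Im (1 - z) > 0" using t0 Imw[of n] by (simp add: z_def)
      then have z1: "1 - z \<noteq> 0" by auto
      have "norm (Ln (1 - z)) \<le> \<bar>Re (Ln (1 - z))\<bar> + \<bar>Im (Ln (1 - z))\<bar>" by (rule cmod_le)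
      also have "\<bar>Im (Ln (1 - z))\<bar> \<le> pi"
        using mpi_less_Im_Ln[of "1 - z"] Im_Ln_le_pi[of "1 - z"] z1 by auto
      also have "\<bar>Re (Ln (1 - z))\<bar> = \<bar>ln (cmod (1 - z))\<bar>" using z1 by simp
      also have "\<bar>ln (cmod (1 - z))\<bar> \<le> ln (1 + M) + 2 / sqrt \<bar>1 - t * a\<bar>"
      proof (rule ln_bound[OF v0])
        have "\<bar>Re (1 - z)\<bar> \<le> cmod (1 - z)" by (rule abs_Re_le_cmod)
        then show "\<bar>1 - t * a\<bar> \<le> cmod (1 - z)" using Rew[of n] by (simp add: z_def)
        have "cmod (1 - z) \<le> 1 + cmod z" using norm_triangle_ineq4[of 1 z] by simp
        then show "cmod (1 - z) \<le> 1 + M" using nz t0 M1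
          by (smt (verit) mult_left_le_one_le)
        show "1 \<le> 1 + M" using M1 by simp
      qed
      finally have nL: "norm (Ln (1 - z)) \<le> ln (1 + M) + 2 / sqrt \<bar>1 - t * a\<bar> + pi" by simp
      have "norm (\<phi> n t) = norm (Ln (1 - z)) * (1 / t)"
        using t0 by (simp add: \<phi>_def z_def norm_divide)
      also have "\<dots> \<le> (ln (1 + M) + 2 / sqrt \<bar>1 - t * a\<bar> + pi) * (2 * M)"
      proof (rule mult_mono[OF nL tM])
        have "0 \<le> ln (1 + M)" using M1 by simp
        moreover have "0 \<le> 2 / sqrt \<bar>1 - t * a\<bar>" by simp
        ultimately show "0 \<le> ln (1 + M) + 2 / sqrt \<bar>1 - t * a\<bar> + pi" using pi_gt_zero by linarith
      qed (use t0 in simp)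
      also have "\<dots> = 2*M*(pi + ln (1+M)) + 4*M * (1 / sqrt \<bar>1 - t*a\<bar>)"
        by (simp add: field_simps)
      finally show ?thesis using hge M1 by linarith
    qed
  qed
  have conv: "(\<lambda>n. \<phi> n t) \<longlonglongrightarrow> \<psi> t" if t: "t \<in> S" for t
  proof -
    have t0: "0 < t" "t \<le> 1" "t \<noteq> 1/a" using t by (auto simp: S_def)
    have "(\<lambda>n. 1 - of_real t * w n) \<longlonglongrightarrow> 1 - of_real t * complex_of_real a"
      unfolding w_def by (intro tendsto_intros wseq_lim)
    moreover have "Re (1 - of_real t * complex_of_real a) \<noteq> 0"
      using t0 a0 by (auto simp: field_simps)
    moreover have "eventually (\<lambda>n. Im (1 - of_real t * w n) > 0) sequentially"
      using t0 Imw by simp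
    ultimately have "(\<lambda>n. Ln (1 - of_real t * w n)) \<longlonglongrightarrow> Ln (1 - of_real t * complex_of_real a)"
      by (intro Ln_lim_real) auto
    then show ?thesis unfolding \<phi>_def \<psi>_def by (intro tendsto_divide tendsto_const) (use t0 in auto)
  qed
  have "(\<lambda>n. integral S (\<phi> n)) \<longlonglongrightarrow> integral S \<psi>"
    by (rule dominated_convergence(2)[OF int_phi int_h bound conv])
  then have "(\<lambda>n. - integral S (\<phi> n)) \<longlonglongrightarrow> - integral S \<psi>" by (rule tendsto_minus)
  moreover have "Li2 (w n) = - integral S (\<phi> n)" for n
    by (simp add: Li2_def \<phi>_def[abs_def] iS)
  moreover have "Li2 (complex_of_real a) = - integral S \<psi>"
    by (simp add: Li2_def \<psi>_def[abs_def] iS)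
  ultimately show ?thesis unfolding w_def by simp
qed

lemma isCont_Li2: "w \<in> Om1 \<Longrightarrow> isCont Li2 w"
  using Li2_deriv DERIV_isCont by blast

lemma Li2_formula: "\<exists>H c. continuous_on Vs H \<and> (\<forall>w\<in>Vs-{1}. Li2 w = H w + c - Ln w * Ln (1 - w))"
proof -
  obtain H c where H: "continuous_on Vs H" and eq: "\<And>w. w \<in> Om \<Longrightarrow> Li2 w = H w + c - Ln w * Ln (1 - w)"
    using Li2_H by blast
  have "Li2 w = H w + c - Ln w * Ln (1 - w)" if w: "w \<in> Vs - {1}" for w
  proof (cases "w \<in> Om1")
    case True then show ?thesis using w eq by (auto simp: Om_def)
  next
    case False
    then have Imw: "Im w = 0" and Rew: "1 \<le> Re w" by (auto simp: Om1_iff)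
    define a where "a = Re w"
    have wa: "w = complex_of_real a" using Imw by (simp add: a_def complex_eq_iff)
    have "a \<noteq> 1"
    proof
      assume "a = 1"
      then have "w = 1" using wa by simp
      then show False using w by simp
    qed
    then have a1: "a > 1" using Rew unfolding a_def by linarith
    define u where "u n = complex_of_real a - \<i> * complex_of_real (inverse (real (Suc n)))" for n
    have ReIm: "Re (complex_of_real a - \<i> * complex_of_real r) = a"
       "Im (complex_of_real a - \<i> * complex_of_real r) = - r" for r
      by simp_all
    have uOm: "u n \<in> Om" for n
      using ReIm(2)[of "inverse (real (Suc n))"] by (auto simp: Om_def Vs_iff Om1_iff u_def)
    have lim1: "(\<lambda>n. Li2 (u n)) \<longlonglongrightarrow> Li2 w"
      unfolding u_def wa by (rule Li2_cut_lim[OF a1])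
    have ul: "u \<longlonglongrightarrow> w" unfolding u_def wa by (rule wseq_lim)
    have wV: "w \<in> Vs" using w by simp
    have cH: "isCont H w" using H open_Vs wV continuous_on_eq_continuous_at by blast
    have cL: "isCont Ln w" using a1 wa by (intro continuous_at_Ln) (auto simp: complex_nonpos_Reals_iff)
    have l1u: "(\<lambda>n. Ln (1 - u n)) \<longlonglongrightarrow> Ln (1 - w)"
    proof (rule Ln_lim_real)
      show "(\<lambda>n. 1 - u n) \<longlonglongrightarrow> 1 - w" by (intro tendsto_intros ul)
      show "Im (1 - w) = 0" "Re (1 - w) \<noteq> 0" using wa a1 by auto
      show "\<forall>\<^sub>F n in sequentially. 0 < Im (1 - u n)"
        using ReIm(2) by (simp add: u_def)
    qed
    have lim2: "(\<lambda>n. H (u n) + c - Ln (u n) * Ln (1 - u n)) \<longlonglongrightarrow> H w + c - Ln w * Ln (1 - w)"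
      by (intro tendsto_intros isCont_tendsto_compose[OF cH ul] isCont_tendsto_compose[OF cL ul] l1u)
    have "(\<lambda>n. Li2 (u n)) \<longlonglongrightarrow> H w + c - Ln w * Ln (1 - w)"
      using lim2 eq[OF uOm] by simp
    then show ?thesis using lim1 LIMSEQ_unique by blast
  qed
  then show ?thesis using H by blast
qed

definition isM :: "complex \<Rightarrow> complex \<Rightarrow> bool" where
  "isM P z \<longleftrightarrow> (\<exists>n::int. z = of_int n * P)"

lemma isM_0[simp]: "isM P 0" unfolding isM_def by (intro exI[of _ 0]) simp
lemma isM_add: "isM P a \<Longrightarrow> isM P b \<Longrightarrow> isM P (a + b)"
  unfolding isM_def by (metis distrib_right of_int_add)
lemma isM_minus: "isM P a \<Longrightarrow> isM P (- a)"
  unfolding isM_def by (metis mult_minus_left of_int_minus)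
lemma isM_diff: "isM P a \<Longrightarrow> isM P b \<Longrightarrow> isM P (a - b)"
  using isM_add[of P a "- b"] isM_minus[of P b] by simp
lemma isM_int: "isM P (of_int n * P)" unfolding isM_def by blast
lemma isM_intmult: "isM P a \<Longrightarrow> isM P (of_int k * a)"
  unfolding isM_def by (metis mult.assoc of_int_mult)
lemma isM_scale: "isM P a \<Longrightarrow> isM (c * P) (c * a)"
  unfolding isM_def by (metis mult.left_commute)

lemma exp_log_int: "exp u = exp v \<Longrightarrow> \<exists>n::int. u = v + of_int n * (2 * of_real pi * \<i>)"
proof -
  assume "exp u = exp v"
  then obtain n :: int where n: "u = v + (of_int (2 * n) * pi) * \<i>" unfolding exp_eq by blast
  show ?thesis by (rule exI[of _ n]) (simp add: n)
qed

lemma ringid1: fixes z0 z1 p q T :: complex shows "(z0 - p*T) * (- z1 + q*T) / 2 + T/2 * (p * (-z1 + q*T) + q * (z0 - p*T)) - z0 * (-z1 + q*T) - z0*z1/2 = - (p*q*(T*T))/2"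
  by (simp add: field_simps)
lemma ringid2: fixes z0 z1 p q T :: complex shows
 "- ((z0 - p*T) * (- z1 + q*T)) + (z0 - p*T) * (- z1 + q*T) / 2 + T/2 * (p * (-z1 + q*T) + q * (z0 - p*T)) + z0*z1/2 - z1 * (z0 - p*T) = (p*q*(T*T))/2"
  by (simp add: field_simps)

lemma TT: "(2 * of_real pi * \<i>) * (2 * of_real pi * \<i>) = - 4 * (of_real (pi^2) :: complex)"
  by (simp add: power2_eq_square algebra_simps)

lemma L_expand:
  assumes rel: "exp z1 * (1 - exp z0) = 1" and wdef: "w = exp z0" and Tdef: "T = 2 * of_real pi * \<i>"
  obtains p q :: int where
    "Ln w = z0 - of_int p * T"
    "Ln (1 - w) = - z1 + of_int q * T"
    "lifted_dilog z0 z1 = Li2 w + Ln w * Ln (1 - w) / 2 - of_real (pi^2)/6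
        + T / 2 * (of_int p * Ln (1 - w) + of_int q * Ln w)"
proof -
  have T0: "T \<noteq> 0" by (simp add: Tdef)
  have w0: "w \<noteq> 0" using wdef by simp
  have r1: "(1 - w) * exp z1 = 1" using rel unfolding wdef by (simp only: mult.commute)
  have w1: "1 - w \<noteq> 0"
  proof
    assume "1 - w = 0"
    then show False using r1 by simp
  qed
  have "exp z0 = exp (Ln w)" using w0 wdef by simp
  then obtain p :: int where p: "z0 = Ln w + of_int p * T"
    using exp_log_int[of z0 "Ln w"] unfolding Tdef[symmetric] by blast
  have "inverse (1 - w) = exp z1" using r1 by (rule inverse_unique)
  moreover have "exp (- Ln (1 - w)) = inverse (1 - w)"
    using w1 by (simp add: exp_minus)
  ultimately have "exp z1 = exp (- Ln (1 - w))" by simp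
  then obtain q :: int where q: "z1 = - Ln (1 - w) + of_int q * T"
    using exp_log_int[of z1 "- Ln (1 - w)"] unfolding Tdef[symmetric] by blast
  have lw: "Ln w = z0 - of_int p * T" using p by simp
  have l1w: "Ln (1 - w) = - z1 + of_int q * T" using q by simp
  have e1: "(z0 - Ln w) / T = of_int p" using lw T0 by simp
  have e2: "(z1 + Ln (1 - w)) / T = of_int q" using l1w T0 by simp
  have piI: "of_real pi * \<i> = T / 2" by (simp add: Tdef)
  have L: "lifted_dilog z0 z1 = Li2 w + Ln w * Ln (1 - w) / 2 - of_real (pi^2)/6
        + T / 2 * (of_int p * Ln (1 - w) + of_int q * Ln w)"
    unfolding lifted_dilog_def Let_def wdef[symmetric] Tdef[symmetric]
    by (simp only: e1 e2 piI)
  show ?thesis by (rule that[OF lw l1w L])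
qed

lemma L_G1:
  assumes rel: "exp z1 * (1 - exp z0) = 1"
  shows "isM (2 * of_real (pi^2)) (lifted_dilog z0 z1 -
           (Li2 (exp z0) - of_real (pi^2) / 6 + z0 * Ln (1 - exp z0) + z0 * z1 / 2))"
proof -
  define T where "T = 2 * of_real pi * \<i>"
  define w where "w = exp z0"
  obtain p q :: int where lw: "Ln w = z0 - of_int p * T"
    and l1w: "Ln (1 - w) = - z1 + of_int q * T"
    and L: "lifted_dilog z0 z1 = Li2 w + Ln w * Ln (1 - w) / 2 - of_real (pi^2)/6
        + T / 2 * (of_int p * Ln (1 - w) + of_int q * Ln w)"
    using L_expand[OF rel w_def T_def] by blast
  have "lifted_dilog z0 z1 - (Li2 w - of_real (pi^2) / 6 + z0 * Ln (1 - w) + z0 * z1 / 2)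
     = Ln w * Ln (1 - w) / 2 + T / 2 * (of_int p * Ln (1 - w) + of_int q * Ln w)
       - z0 * Ln (1 - w) - z0 * z1 / 2"
    unfolding L by (simp add: algebra_simps)
  also have "\<dots> = - (of_int p * of_int q * (T * T)) / 2"
    unfolding lw l1w by (rule ringid1)
  also have "\<dots> = of_int (p * q) * (2 * of_real (pi^2))"
    unfolding T_def TT by simp
  finally have eq: "lifted_dilog z0 z1 - (Li2 w - of_real (pi^2) / 6 + z0 * Ln (1 - w) + z0 * z1 / 2)
     = of_int (p * q) * (2 * of_real (pi^2))" .
  show ?thesis unfolding isM_def using eq[unfolded w_def] by (rule exI)
qed

lemma L_G2:
  assumes rel: "exp z1 * (1 - exp z0) = 1"
    and H: "Li2 (exp z0) = H (exp z0) + c - Ln (exp z0) * Ln (1 - exp z0)"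
  shows "isM (2 * of_real (pi^2)) (lifted_dilog z0 z1 -
           (H (exp z0) + c - of_real (pi^2) / 6 - z0 * z1 / 2 + z1 * Ln (exp z0)))"
proof -
  define T where "T = 2 * of_real pi * \<i>"
  define w where "w = exp z0"
  obtain p q :: int where lw: "Ln w = z0 - of_int p * T"
    and l1w: "Ln (1 - w) = - z1 + of_int q * T"
    and L: "lifted_dilog z0 z1 = Li2 w + Ln w * Ln (1 - w) / 2 - of_real (pi^2)/6
        + T / 2 * (of_int p * Ln (1 - w) + of_int q * Ln w)"
    using L_expand[OF rel w_def T_def] by blast
  have H': "Li2 w = H w + c - Ln w * Ln (1 - w)" using H unfolding w_def .
  have "lifted_dilog z0 z1 - (H w + c - of_real (pi^2) / 6 - z0 * z1 / 2 + z1 * Ln w)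
     = - (Ln w * Ln (1 - w)) + Ln w * Ln (1 - w) / 2 + T / 2 * (of_int p * Ln (1 - w) + of_int q * Ln w)
       + z0 * z1 / 2 - z1 * Ln w"
    unfolding L H' by (simp add: algebra_simps)
  also have "\<dots> = (of_int p * of_int q * (T * T)) / 2"
    unfolding lw l1w by (rule ringid2)
  also have "\<dots> = of_int (- (p * q)) * (2 * of_real (pi^2))"
    unfolding T_def TT by simp
  finally have eq: "lifted_dilog z0 z1 - (H w + c - of_real (pi^2) / 6 - z0 * z1 / 2 + z1 * Ln w)
     = of_int (- (p * q)) * (2 * of_real (pi^2))" .
  show ?thesis unfolding isM_def using eq[unfolded w_def] by (rule exI)
qed

definition locmod :: "complex \<Rightarrow> 'a::t2_space set \<Rightarrow> ('a \<Rightarrow> complex) \<Rightarrow> 'a \<Rightarrow> bool" where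
  "locmod P S f x \<longleftrightarrow> (\<exists>g. continuous (at x within S) g \<and> (\<forall>\<^sub>F y in nhds x. y \<in> S \<longrightarrow> isM P (f y - g y)))"

lemma ev_nhds_of_within:
  assumes "\<forall>\<^sub>F y in at x within S. Q y" "Q x"
  shows "\<forall>\<^sub>F y in nhds x. y \<in> S \<longrightarrow> Q y"
proof -
  have "\<forall>\<^sub>F y in nhds x. y \<noteq> x \<longrightarrow> y \<in> S \<longrightarrow> Q y" using assms(1) by (simp add: eventually_at_filter)
  then show ?thesis by (rule eventually_mono) (use assms(2) in auto)
qed

lemma cont_ev:
  assumes "continuous (at x within S) f" "open U" "f x \<in> U"
  shows "\<forall>\<^sub>F y in nhds x. y \<in> S \<longrightarrow> f y \<in> U"
proof (rule ev_nhds_of_within)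
  have "(f \<longlongrightarrow> f x) (at x within S)" using assms(1) by (simp add: continuous_within)
  then show "\<forall>\<^sub>F y in at x within S. f y \<in> U" using assms(2,3) by (rule topological_tendstoD)
qed (use assms in auto)

lemma locmod_cont:
  assumes "\<And>x. x \<in> S \<Longrightarrow> locmod P S f x"
  shows "continuous_mod_on P S f"
  unfolding continuous_mod_on_def
proof (intro ballI allI impI)
  fix x e assume x: "x \<in> S" and e: "(e::real) > 0"
  obtain g where g: "continuous (at x within S) g" and ev: "\<forall>\<^sub>F y in nhds x. y \<in> S \<longrightarrow> isM P (f y - g y)"
    using assms[OF x] unfolding locmod_def by blast
  have "isM P (f x - g x)" using eventually_nhds_x_imp_x[OF ev] x by simp
  then obtain m :: int where m: "f x - g x = of_int m * P" unfolding isM_def by blast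
  have ev1: "\<forall>\<^sub>F y in at x within S. dist (g y) (g x) < e"
    using g e by (simp add: continuous_within tendsto_iff)
  have ev2: "\<forall>\<^sub>F y in at x within S. isM P (f y - g y)"
    using ev unfolding eventually_at_filter by (rule eventually_mono) auto
  show "\<forall>\<^sub>F y in at x within S. \<exists>n::int. cmod (f y - f x - of_int n * P) < e"
    using ev1 ev2
  proof eventually_elim
    case (elim y)
    then obtain n :: int where n: "f y - g y = of_int n * P" unfolding isM_def by blast
    have "f y - f x - of_int (n - m) * P = g y - g x" using n m by (simp add: algebra_simps)
    then show ?case using elim(1) by (intro exI[of _ "n - m"]) (simp add: dist_norm)
  qed
qed

lemma locmod_sum:
  assumes "finite C" "\<And>c. c \<in> C \<Longrightarrow> locmod P S (f c) x"
  shows "locmod P S (\<lambda>y. \<Sum>c\<in>C. f c y) x"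
  using assms
proof (induction C rule: finite_induct)
  case empty
  show ?case unfolding locmod_def by (intro exI[of _ "\<lambda>_. 0"]) auto
next
  case (insert a C)
  obtain g1 where g1: "continuous (at x within S) g1" "\<forall>\<^sub>F y in nhds x. y \<in> S \<longrightarrow> isM P (f a y - g1 y)"
    using insert.prems unfolding locmod_def by blast
  obtain g2 where g2: "continuous (at x within S) g2" "\<forall>\<^sub>F y in nhds x. y \<in> S \<longrightarrow> isM P ((\<Sum>c\<in>C. f c y) - g2 y)"
    using insert.IH insert.prems unfolding locmod_def by blast
  show ?case unfolding locmod_def
  proof (intro exI[of _ "\<lambda>y. g1 y + g2 y"] conjI)
    show "continuous (at x within S) (\<lambda>y. g1 y + g2 y)" using g1 g2 by (intro continuous_intros)
    show "\<forall>\<^sub>F y in nhds x. y \<in> S \<longrightarrow> isM P ((\<Sum>c\<in>insert a C. f c y) - (g1 y + g2 y))"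
      using g1(2) g2(2)
    proof eventually_elim
      case (elim y)
      show ?case
      proof
        assume y: "y \<in> S"
        have "(\<Sum>c\<in>insert a C. f c y) - (g1 y + g2 y) = (f a y - g1 y) + ((\<Sum>c\<in>C. f c y) - g2 y)"
          using insert.hyps by simp
        moreover have i1: "isM P (f a y - g1 y)" using elim y by auto
        moreover have i2: "isM P ((\<Sum>c\<in>C. f c y) - g2 y)" using elim y by auto
        ultimately show "isM P ((\<Sum>c\<in>insert a C. f c y) - (g1 y + g2 y))"
          by (simp only: isM_add)
      qed
    qed
  qed
qed

lemma LOC:
  fixes z0 z1c z1 :: "'a::t2_space \<Rightarrow> complex"
  assumes x: "x \<in> S" and c0: "continuous (at x within S) z0" and c1: "continuous (at x within S) z1c"
    and rel: "\<forall>\<^sub>F y in nhds x. y \<in> S \<longrightarrow> exp (z1 y) * (1 - exp (z0 y)) = 1"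
  shows "\<exists>g. continuous (at x within S) g \<and> (\<forall>\<^sub>F y in nhds x. y \<in> S \<longrightarrow>
     (\<forall>j::int. z1 y = z1c y + of_int j * (2 * of_real pi * \<i>) \<longrightarrow>
        isM (2 * of_real (pi^2)) (lifted_dilog (z0 y) (z1 y) - g y - of_int j * (of_real pi * \<i>) * z0 y)))"
proof -
  obtain H c where H: "continuous_on Vs H" and Hf: "\<And>w. w \<in> Vs - {1} \<Longrightarrow> Li2 w = H w + c - Ln w * Ln (1 - w)"
    using Li2_formula by blast
  have relx: "exp (z1 x) * (1 - exp (z0 x)) = 1" using eventually_nhds_x_imp_x[OF rel] x by simp
  then have w1: "exp (z0 x) \<noteq> 1" by auto
  have ce: "continuous (at x within S) (\<lambda>y. exp (z0 y))" using c0 by (intro continuous_intros)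
  show ?thesis
  proof (cases "exp (z0 x) \<in> Om1")
    case True
    define g where "g y = Li2 (exp (z0 y)) - of_real (pi^2)/6 + z0 y * Ln (1 - exp (z0 y)) + z0 y * z1c y / 2" for y
    have ce1: "continuous (at x within S) (\<lambda>y. 1 - exp (z0 y))" using c0 by (intro continuous_intros)
    have cont: "continuous (at x within S) g"
      unfolding g_def
      by (intro continuous_intros continuous_within_compose3[OF isCont_Li2[OF True] ce]
           continuous_within_compose3[OF continuous_at_Ln[OF Om1_ln[OF True]] ce1] c0 c1) auto
    show ?thesis
    proof (intro exI[of _ g] conjI cont)
      show "\<forall>\<^sub>F y in nhds x. y \<in> S \<longrightarrow> (\<forall>j::int. z1 y = z1c y + of_int j * (2 * of_real pi * \<i>) \<longrightarrow>
        isM (2 * of_real (pi^2)) (lifted_dilog (z0 y) (z1 y) - g y - of_int j * (of_real pi * \<i>) * z0 y))"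
        using rel
      proof eventually_elim
        case (elim y)
        show ?case
        proof (intro impI allI)
          fix j :: int assume y: "y \<in> S" and j: "z1 y = z1c y + of_int j * (2 * of_real pi * \<i>)"
          have "isM (2 * of_real (pi^2)) (lifted_dilog (z0 y) (z1 y) -
              (Li2 (exp (z0 y)) - of_real (pi^2) / 6 + z0 y * Ln (1 - exp (z0 y)) + z0 y * z1 y / 2))"
            using elim y by (intro L_G1) auto
          moreover have "Li2 (exp (z0 y)) - of_real (pi^2) / 6 + z0 y * Ln (1 - exp (z0 y)) + z0 y * z1 y / 2
              = g y + of_int j * (of_real pi * \<i>) * z0 y"
            unfolding g_def j by (simp add: field_simps)
          ultimately show "isM (2 * of_real (pi^2)) (lifted_dilog (z0 y) (z1 y) - g y - of_int j * (of_real pi * \<i>) * z0 y)"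
            by (simp add: diff_diff_eq)
        qed
      qed
    qed
  next
    case False
    then have "Im (exp (z0 x)) = 0" "1 \<le> Re (exp (z0 x))" by (auto simp: Om1_iff)
    then have xV: "exp (z0 x) \<in> Vs" by (auto simp: Vs_iff)
    have evV: "\<forall>\<^sub>F y in nhds x. y \<in> S \<longrightarrow> exp (z0 y) \<in> Vs"
      by (rule cont_ev[OF ce open_Vs xV])
    define g where "g y = H (exp (z0 y)) + c - of_real (pi^2)/6 - z0 y * z1c y / 2 + z1c y * Ln (exp (z0 y))" for y
    have cH: "isCont H (exp (z0 x))" using H open_Vs xV continuous_on_eq_continuous_at by blast
    have cL: "isCont Ln (exp (z0 x))" using xV by (intro continuous_at_Ln) (simp add: Vs_def)
    have cont: "continuous (at x within S) g"
      unfolding g_def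
      by (intro continuous_intros continuous_within_compose3[OF cH ce] continuous_within_compose3[OF cL ce] c0 c1) auto
    show ?thesis
    proof (intro exI[of _ g] conjI cont)
      show "\<forall>\<^sub>F y in nhds x. y \<in> S \<longrightarrow> (\<forall>j::int. z1 y = z1c y + of_int j * (2 * of_real pi * \<i>) \<longrightarrow>
        isM (2 * of_real (pi^2)) (lifted_dilog (z0 y) (z1 y) - g y - of_int j * (of_real pi * \<i>) * z0 y))"
        using rel evV
      proof eventually_elim
        case (elim y)
        show ?case
        proof (intro impI allI)
          fix j :: int assume y: "y \<in> S" and j: "z1 y = z1c y + of_int j * (2 * of_real pi * \<i>)"
          have ry: "exp (z1 y) * (1 - exp (z0 y)) = 1" using elim y by auto
          then have "exp (z0 y) \<noteq> 1" by auto
          then have "exp (z0 y) \<in> Vs - {1}" using elim y by auto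
          note Hy = Hf[OF this]
          have A: "isM (2 * of_real (pi^2)) (lifted_dilog (z0 y) (z1 y) -
              (H (exp (z0 y)) + c - of_real (pi^2) / 6 - z0 y * z1 y / 2 + z1 y * Ln (exp (z0 y))))"
            by (rule L_G2[where H=H, OF ry Hy])
          have "exp (z0 y) = exp (Ln (exp (z0 y)))" by simp
          then obtain p :: int where p: "z0 y = Ln (exp (z0 y)) + of_int p * (2 * of_real pi * \<i>)"
            using exp_log_int by blast
          have lp: "Ln (exp (z0 y)) = z0 y - of_int p * (2 * of_real pi * \<i>)" using p by (metis add_diff_cancel_right')
          have "lifted_dilog (z0 y) (z1 y) - g y - of_int j * (of_real pi * \<i>) * z0 y
              = (lifted_dilog (z0 y) (z1 y) -
              (H (exp (z0 y)) + c - of_real (pi^2) / 6 - z0 y * z1 y / 2 + z1 y * Ln (exp (z0 y))))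
              + of_int j * (2 * of_real pi * \<i>) * (- of_int p * (2 * of_real pi * \<i>))"
            unfolding g_def j lp by (simp add: field_simps)
          also have "of_int j * (2 * of_real pi * \<i>) * (- of_int p * (2 * of_real pi * \<i>))
              = of_int (2 * j * p) * (2 * of_real (pi^2))"
          proof -
            have "of_int j * (2 * of_real pi * \<i>) * (- of_int p * (2 * of_real pi * \<i>))
               = - of_int j * of_int p * ((2 * of_real pi * \<i>) * (2 * of_real pi * \<i>))" by (simp add: algebra_simps)
            also have "\<dots> = of_int (2 * j * p) * (2 * of_real (pi^2))" unfolding TT by simp
            finally show ?thesis .
          qed
          finally show "isM (2 * of_real (pi^2)) (lifted_dilog (z0 y) (z1 y) - g y - of_int j * (of_real pi * \<i>) * z0 y)"
            using A isM_add isM_int by metis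
        qed
      qed
    qed
  qed
qed

lemma relR:
  assumes "exp zN \<noteq> 1" "1 - exp z = (1 - exp zN) * exp (- c - th)"
  shows "exp (Ln (exp th / (1 - exp zN)) + c) * (1 - exp z) = 1"
proof -
  have d: "1 - exp zN \<noteq> 0" using assms(1) by simp
  have K0: "exp th / (1 - exp zN) \<noteq> 0" using d by simp
  have e1: "exp (Ln (exp th / (1 - exp zN)) + c) = exp th / (1 - exp zN) * exp c"
    by (simp only: exp_add exp_Ln[OF K0])
  have "exp (Ln (exp th / (1 - exp zN)) + c) * (1 - exp z)
      = exp th / (1 - exp zN) * exp c * ((1 - exp zN) * exp (- c - th))"
    by (simp only: e1 assms(2))
  also have "\<dots> = 1" using d by (simp add: exp_diff exp_minus field_simps)
  finally show ?thesis .
qed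

lemma isM_rot: "isM (2 * of_real (pi^2)) D \<Longrightarrow> isM (2 * of_real (pi^2) * \<i>) (- \<i> * of_int e * D)"
  unfolding isM_def
proof (elim exE)
  fix n :: int assume "D = of_int n * (2 * of_real (pi^2))"
  then have "- \<i> * of_int e * D = of_int (- (e * n)) * (2 * of_real (pi^2) * \<i>)" by (simp add: algebra_simps)
  then show "\<exists>n::int. - \<i> * of_int e * D = of_int n * (2 * of_real (pi^2) * \<i>)" by blast
qed

lemma Ln_exp_int: "\<exists>p::int. Ln (exp z) = z - of_int p * (2 * of_real pi * \<i>)"
proof -
  have "exp z = exp (Ln (exp z))" by simp
  then obtain p :: int where p: "z = Ln (exp z) + of_int p * (2 * of_real pi * \<i>)"
    using exp_log_int by blast
  then have "Ln (exp z) = z - of_int p * (2 * of_real pi * \<i>)" by (metis add_diff_cancel_right')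
  then show ?thesis by blast
qed

lemma int_small: "cmod (of_int m * (2 * of_real pi * \<i>)) < 2 * pi \<Longrightarrow> m = 0"
proof -
  assume a: "cmod (of_int m * (2 * of_real pi * \<i>)) < 2 * pi"
  have "cmod (of_int m * (2 * of_real pi * \<i>)) = \<bar>real_of_int m\<bar> * (2 * pi)"
    by (simp add: norm_mult)
  then have "\<bar>real_of_int m\<bar> < 1" using a pi_gt_zero by (simp add: mult_less_cancel_right2)
  then show "m = 0" by linarith
qed

lemma CORE:
  fixes zN zW zS zE cN cW cS cE th V :: "'a::t2_space \<Rightarrow> complex" and e :: int
  assumes x: "x \<in> S"
    and czN: "continuous (at x within S) zN" and czW: "continuous (at x within S) zW"
    and czS: "continuous (at x within S) zS" and czE: "continuous (at x within S) zE"
    and ccN: "continuous (at x within S) cN" and ccW: "continuous (at x within S) cW"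
    and ccS: "continuous (at x within S) cS" and ccE: "continuous (at x within S) cE"
    and cth: "continuous (at x within S) th"
    and sum0: "\<And>y. zN y - zW y + zS y - zE y = 0"
    and rN: "\<And>y. y \<in> S \<Longrightarrow> cN y = - th y"
    and rW: "\<And>y. y \<in> S \<Longrightarrow> 1 - exp (zW y) = (1 - exp (zN y)) * exp (- cW y - th y)"
    and rS: "\<And>y. y \<in> S \<Longrightarrow> 1 - exp (zS y) = (1 - exp (zN y)) * exp (- cS y - th y)"
    and rE: "\<And>y. y \<in> S \<Longrightarrow> 1 - exp (zE y) = (1 - exp (zN y)) * exp (- cE y - th y)"
    and V: "\<And>y. y \<in> S \<Longrightarrow> V y = (if exp (zN y) = 1
         then \<i> * of_int e / 2 * (zN y * cN y - zW y * cW y + zS y * cS y - zE y * cE y)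
         else - \<i> * of_int e *
           (lifted_dilog (zN y) (Ln (exp (th y) / (1 - exp (zN y))) + cN y)
          - lifted_dilog (zW y) (Ln (exp (th y) / (1 - exp (zN y))) + cW y)
          + lifted_dilog (zS y) (Ln (exp (th y) / (1 - exp (zN y))) + cS y)
          - lifted_dilog (zE y) (Ln (exp (th y) / (1 - exp (zN y))) + cE y)))"
  shows "locmod (2 * of_real (pi^2) * \<i>) S V x"
proof -
  have rN': "1 - exp (zN y) = (1 - exp (zN y)) * exp (- cN y - th y)" if "y \<in> S" for y
    using rN[OF that] by simp
  let ?T = "2 * of_real pi * \<i> :: complex"
  show ?thesis
  proof (cases "exp (zN x) = 1")
    case False
    define K where "K y = exp (th y) / (1 - exp (zN y))" for y
    have Kx0: "K x \<noteq> 0" using False by (simp add: K_def)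
    have cK: "continuous (at x within S) K"
      unfolding K_def using False by (intro continuous_intros czN cth) auto
    define Lc where "Lc y = (if K x \<in> \<real>\<^sub>\<le>\<^sub>0 then Ln (- K y) + \<i> * of_real pi else Ln (K y))" for y
    have cLc: "continuous (at x within S) Lc"
    proof (cases "K x \<in> \<real>\<^sub>\<le>\<^sub>0")
      case True
      then have nK: "- K x \<notin> \<real>\<^sub>\<le>\<^sub>0" using Kx0 by (auto simp: complex_nonpos_Reals_iff complex_eq_iff)
      have eq: "Lc = (\<lambda>y. Ln (- K y) + \<i> * of_real pi)" using True by (simp add: Lc_def fun_eq_iff)
      have cn: "continuous (at x within S) (\<lambda>y. - K y)" using cK by (intro continuous_intros)
      have "continuous (at x within S) (\<lambda>y. Ln (- K y))"
        by (rule continuous_within_compose3[OF continuous_at_Ln[OF nK] cn])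
      then show ?thesis unfolding eq by (intro continuous_intros)
    next
      case False
      then have "Lc = (\<lambda>y. Ln (K y))" by (simp add: Lc_def fun_eq_iff)
      then show ?thesis using False cK
        by (simp only:) (intro continuous_within_compose3[OF continuous_at_Ln])
    qed
    have eLc: "exp (Lc y) = K y" if "K y \<noteq> 0" for y
    proof (cases "K x \<in> \<real>\<^sub>\<le>\<^sub>0")
      case True
      have "exp (Ln (- K y) + \<i> * of_real pi) = - K y * exp (\<i> * of_real pi)"
        using that by (simp only: exp_add exp_Ln neg_equal_0_iff_equal) simp
      then show ?thesis using True by (simp add: Lc_def)
    next
      case False then show ?thesis using that by (simp add: Lc_def)
    qed
    have evN: "\<forall>\<^sub>F y in nhds x. y \<in> S \<longrightarrow> exp (zN y) \<in> - {1}"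
      by (rule cont_ev) (use False czN in \<open>auto intro: continuous_intros\<close>)
    have rel: "\<forall>\<^sub>F y in nhds x. y \<in> S \<longrightarrow> exp (Ln (K y) + c y) * (1 - exp (z y)) = 1"
      if r: "\<And>y. y \<in> S \<Longrightarrow> 1 - exp (z y) = (1 - exp (zN y)) * exp (- c y - th y)" for z c
      using evN by eventually_elim (auto simp: K_def intro!: relR r)
    have cc: "continuous (at x within S) (\<lambda>y. Lc y + c y)" if "continuous (at x within S) c" for c
      using cLc that by (intro continuous_intros)
    obtain gN where gN: "continuous (at x within S) gN" and eN: "\<forall>\<^sub>F y in nhds x. y \<in> S \<longrightarrow>
       (\<forall>j::int. Ln (K y) + cN y = Lc y + cN y + of_int j * ?T \<longrightarrow>
        isM (2 * of_real (pi^2)) (lifted_dilog (zN y) (Ln (K y) + cN y) - gN y - of_int j * (of_real pi * \<i>) * zN y))"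
      using LOC[OF x czN cc[OF ccN] rel[OF rN']] by blast
    obtain gW where gW: "continuous (at x within S) gW" and eW: "\<forall>\<^sub>F y in nhds x. y \<in> S \<longrightarrow>
       (\<forall>j::int. Ln (K y) + cW y = Lc y + cW y + of_int j * ?T \<longrightarrow>
        isM (2 * of_real (pi^2)) (lifted_dilog (zW y) (Ln (K y) + cW y) - gW y - of_int j * (of_real pi * \<i>) * zW y))"
      using LOC[OF x czW cc[OF ccW] rel[OF rW]] by blast
    obtain gS where gS: "continuous (at x within S) gS" and eS: "\<forall>\<^sub>F y in nhds x. y \<in> S \<longrightarrow>
       (\<forall>j::int. Ln (K y) + cS y = Lc y + cS y + of_int j * ?T \<longrightarrow>
        isM (2 * of_real (pi^2)) (lifted_dilog (zS y) (Ln (K y) + cS y) - gS y - of_int j * (of_real pi * \<i>) * zS y))"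
      using LOC[OF x czS cc[OF ccS] rel[OF rS]] by blast
    obtain gE where gE: "continuous (at x within S) gE" and eE: "\<forall>\<^sub>F y in nhds x. y \<in> S \<longrightarrow>
       (\<forall>j::int. Ln (K y) + cE y = Lc y + cE y + of_int j * ?T \<longrightarrow>
        isM (2 * of_real (pi^2)) (lifted_dilog (zE y) (Ln (K y) + cE y) - gE y - of_int j * (of_real pi * \<i>) * zE y))"
      using LOC[OF x czE cc[OF ccE] rel[OF rE]] by blast
    show ?thesis unfolding locmod_def
    proof (intro exI[of _ "\<lambda>y. - \<i> * of_int e * (gN y - gW y + gS y - gE y)"] conjI)
      show "continuous (at x within S) (\<lambda>y. - \<i> * of_int e * (gN y - gW y + gS y - gE y))"
        using gN gW gS gE by (intro continuous_intros)
      show "\<forall>\<^sub>F y in nhds x. y \<in> S \<longrightarrow> isM (2 * of_real (pi^2) * \<i>) (V y - - \<i> * of_int e * (gN y - gW y + gS y - gE y))"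
        using evN eN eW eS eE
      proof eventually_elim
        case (elim y)
        show ?case
        proof
          assume y: "y \<in> S"
          have n1: "exp (zN y) \<noteq> 1" using elim y by auto
          then have Ky: "K y \<noteq> 0" by (simp add: K_def)
          have "exp (Ln (K y)) = exp (Lc y)" using Ky eLc by simp
          then obtain j :: int where j: "Ln (K y) = Lc y + of_int j * ?T" using exp_log_int by blast
          have jR: "Ln (K y) + c = Lc y + c + of_int j * ?T" for c using j by simp
          have IN: "isM (2 * of_real (pi^2)) (lifted_dilog (zN y) (Ln (K y) + cN y) - gN y - of_int j * (of_real pi * \<i>) * zN y)"
            using elim y jR by blast
          have IW: "isM (2 * of_real (pi^2)) (lifted_dilog (zW y) (Ln (K y) + cW y) - gW y - of_int j * (of_real pi * \<i>) * zW y)"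
            using elim y jR by blast
          have IS: "isM (2 * of_real (pi^2)) (lifted_dilog (zS y) (Ln (K y) + cS y) - gS y - of_int j * (of_real pi * \<i>) * zS y)"
            using elim y jR by blast
          have IE: "isM (2 * of_real (pi^2)) (lifted_dilog (zE y) (Ln (K y) + cE y) - gE y - of_int j * (of_real pi * \<i>) * zE y)"
            using elim y jR by blast
          define D where "D = (lifted_dilog (zN y) (Ln (K y) + cN y) - gN y - of_int j * (of_real pi * \<i>) * zN y)
             - (lifted_dilog (zW y) (Ln (K y) + cW y) - gW y - of_int j * (of_real pi * \<i>) * zW y)
             + (lifted_dilog (zS y) (Ln (K y) + cS y) - gS y - of_int j * (of_real pi * \<i>) * zS y)
             - (lifted_dilog (zE y) (Ln (K y) + cE y) - gE y - of_int j * (of_real pi * \<i>) * zE y)"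
          have ID: "isM (2 * of_real (pi^2)) D" unfolding D_def
            by (intro isM_add isM_diff IN IW IS IE)
          have "D = (lifted_dilog (zN y) (Ln (K y) + cN y) - lifted_dilog (zW y) (Ln (K y) + cW y)
               + lifted_dilog (zS y) (Ln (K y) + cS y) - lifted_dilog (zE y) (Ln (K y) + cE y))
               - (gN y - gW y + gS y - gE y) - of_int j * (of_real pi * \<i>) * (zN y - zW y + zS y - zE y)"
            unfolding D_def by (simp add: algebra_simps)
          also have "zN y - zW y + zS y - zE y = 0" by (rule sum0)
          finally have Deq: "D = (lifted_dilog (zN y) (Ln (K y) + cN y) - lifted_dilog (zW y) (Ln (K y) + cW y)
               + lifted_dilog (zS y) (Ln (K y) + cS y) - lifted_dilog (zE y) (Ln (K y) + cE y))
               - (gN y - gW y + gS y - gE y)" by simp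
          have Veq: "V y = - \<i> * of_int e * (lifted_dilog (zN y) (Ln (K y) + cN y) - lifted_dilog (zW y) (Ln (K y) + cW y)
               + lifted_dilog (zS y) (Ln (K y) + cS y) - lifted_dilog (zE y) (Ln (K y) + cE y))"
            using V[OF y] n1 by (simp add: K_def)
          have "V y - - \<i> * of_int e * (gN y - gW y + gS y - gE y) = - \<i> * of_int e * D"
            unfolding Veq Deq by (simp add: algebra_simps)
          then show "isM (2 * of_real (pi^2) * \<i>) (V y - - \<i> * of_int e * (gN y - gW y + gS y - gE y))"
            using isM_rot[OF ID, of e] by simp
        qed
      qed
    qed
  next
    case True
    have w1: "exp (zW x) = 1" "exp (zS x) = 1" "exp (zE x) = 1"
      using rW[OF x] rS[OF x] rE[OF x] True by auto
    obtain H c where H: "continuous_on Vs H" and Hf: "\<And>w. w \<in> Vs - {1} \<Longrightarrow> Li2 w = H w + c - Ln w * Ln (1 - w)"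
      using Li2_formula by blast
    have oneV: "(1::complex) \<in> Vs" by (simp add: Vs_iff)
    have cH1: "isCont H 1" using H open_Vs oneV continuous_on_eq_continuous_at by blast
    have cL1: "isCont Ln 1" by (rule continuous_at_Ln) (simp add: complex_nonpos_Reals_iff)
    have cexp: "continuous (at x within S) (\<lambda>y. exp (z y))" if "continuous (at x within S) z" for z :: "'a \<Rightarrow> complex"
      using that by (intro continuous_intros)
    have evV: "\<forall>\<^sub>F y in nhds x. y \<in> S \<longrightarrow> exp (z y) \<in> Vs" if "continuous (at x within S) z" "exp (z x) = 1" for z
      by (rule cont_ev[OF cexp[OF that(1)] open_Vs]) (use that oneV in simp)
    have cHz: "continuous (at x within S) (\<lambda>y. H (exp (z y)))" if "continuous (at x within S) z" "exp (z x) = 1" for z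
      using continuous_within_compose3[where g=H and f="\<lambda>y. exp (z y)", OF _ cexp[OF that(1)]] cH1 that(2) by simp
    have cLz: "continuous (at x within S) (\<lambda>y. Ln (exp (z y)))" if "continuous (at x within S) z" "exp (z x) = 1" for z
      using continuous_within_compose3[where g=Ln and f="\<lambda>y. exp (z y)", OF _ cexp[OF that(1)]] cL1 that(2) by simp
    define sl where "sl y = Ln (exp (zN y)) - Ln (exp (zW y)) + Ln (exp (zS y)) - Ln (exp (zE y))" for y
    have csl: "continuous (at x within S) sl"
      unfolding sl_def using True w1 czN czW czS czE by (intro continuous_intros cLz)
    have slx: "sl x = 0" using True w1 by (simp add: sl_def)
    have evsl: "\<forall>\<^sub>F y in nhds x. y \<in> S \<longrightarrow> sl y \<in> ball 0 (2 * pi)"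
      by (rule cont_ev[OF csl open_ball]) (simp add: slx pi_gt_zero)
    define A where "A y = H (exp (zN y)) - H (exp (zW y)) + H (exp (zS y)) - H (exp (zE y))
       + (cN y * Ln (exp (zN y)) - cW y * Ln (exp (zW y)) + cS y * Ln (exp (zS y)) - cE y * Ln (exp (zE y)))
       - (zN y * cN y - zW y * cW y + zS y * cS y - zE y * cE y) / 2" for y
    have cA: "continuous (at x within S) A"
      unfolding A_def using True w1
      by (intro continuous_intros cHz cLz czN czW czS czE ccN ccW ccS ccE) auto
    show ?thesis unfolding locmod_def
    proof (intro exI[of _ "\<lambda>y. - \<i> * of_int e * A y"] conjI)
      show "continuous (at x within S) (\<lambda>y. - \<i> * of_int e * A y)" using cA by (intro continuous_intros)
      show "\<forall>\<^sub>F y in nhds x. y \<in> S \<longrightarrow> isM (2 * of_real (pi^2) * \<i>) (V y - - \<i> * of_int e * A y)"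
        using evV[OF czN True] evV[OF czW w1(1)] evV[OF czS w1(2)] evV[OF czE w1(3)] evsl
      proof eventually_elim
        case (elim y)
        show ?case
        proof
          assume y: "y \<in> S"
          show "isM (2 * of_real (pi^2) * \<i>) (V y - - \<i> * of_int e * A y)"
          proof (cases "exp (zN y) = 1")
            case True
            then have "exp (zW y) = 1" "exp (zS y) = 1" "exp (zE y) = 1"
              using rW[OF y] rS[OF y] rE[OF y] by auto
            then have Aeq: "A y = - (zN y * cN y - zW y * cW y + zS y * cS y - zE y * cE y) / 2"
              using True by (simp add: A_def field_simps)
            have Veq: "V y = \<i> * of_int e / 2 * (zN y * cN y - zW y * cW y + zS y * cS y - zE y * cE y)"
              using V[OF y] True by simp
            have "V y - - \<i> * of_int e * A y = 0" unfolding Aeq Veq by (simp add: field_simps)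
            then show ?thesis by simp
          next
            case False
            define LK where "LK = Ln (exp (th y) / (1 - exp (zN y)))"
            have G: "isM (2 * of_real (pi^2)) (lifted_dilog (z y) (LK + c' y) -
                 (H (exp (z y)) + c - of_real (pi^2) / 6 - z y * (LK + c' y) / 2 + (LK + c' y) * Ln (exp (z y))))"
              if r: "1 - exp (z y) = (1 - exp (zN y)) * exp (- c' y - th y)" and zV: "exp (z y) \<in> Vs" for z c'
            proof -
              have rel: "exp (LK + c' y) * (1 - exp (z y)) = 1"
                unfolding LK_def by (rule relR[OF False r])
              then have "exp (z y) \<noteq> 1" by auto
              then have "exp (z y) \<in> Vs - {1}" using zV by simp
              then show ?thesis by (rule L_G2[where H=H, OF rel Hf])
            qed
            have GN: "isM (2 * of_real (pi^2)) (lifted_dilog (zN y) (LK + cN y) -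
                 (H (exp (zN y)) + c - of_real (pi^2) / 6 - zN y * (LK + cN y) / 2 + (LK + cN y) * Ln (exp (zN y))))"
              by (rule G[where z=zN and c'=cN, OF rN'[OF y]]) (use elim y in auto)
            have GW: "isM (2 * of_real (pi^2)) (lifted_dilog (zW y) (LK + cW y) -
                 (H (exp (zW y)) + c - of_real (pi^2) / 6 - zW y * (LK + cW y) / 2 + (LK + cW y) * Ln (exp (zW y))))"
              by (rule G[where z=zW and c'=cW, OF rW[OF y]]) (use elim y in auto)
            have GS: "isM (2 * of_real (pi^2)) (lifted_dilog (zS y) (LK + cS y) -
                 (H (exp (zS y)) + c - of_real (pi^2) / 6 - zS y * (LK + cS y) / 2 + (LK + cS y) * Ln (exp (zS y))))"
              by (rule G[where z=zS and c'=cS, OF rS[OF y]]) (use elim y in auto)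
            have GE: "isM (2 * of_real (pi^2)) (lifted_dilog (zE y) (LK + cE y) -
                 (H (exp (zE y)) + c - of_real (pi^2) / 6 - zE y * (LK + cE y) / 2 + (LK + cE y) * Ln (exp (zE y))))"
              by (rule G[where z=zE and c'=cE, OF rE[OF y]]) (use elim y in auto)
            define E where "E = (lifted_dilog (zN y) (LK + cN y) -
                 (H (exp (zN y)) + c - of_real (pi^2) / 6 - zN y * (LK + cN y) / 2 + (LK + cN y) * Ln (exp (zN y))))
              - (lifted_dilog (zW y) (LK + cW y) -
                 (H (exp (zW y)) + c - of_real (pi^2) / 6 - zW y * (LK + cW y) / 2 + (LK + cW y) * Ln (exp (zW y))))
              + (lifted_dilog (zS y) (LK + cS y) -
                 (H (exp (zS y)) + c - of_real (pi^2) / 6 - zS y * (LK + cS y) / 2 + (LK + cS y) * Ln (exp (zS y))))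
              - (lifted_dilog (zE y) (LK + cE y) -
                 (H (exp (zE y)) + c - of_real (pi^2) / 6 - zE y * (LK + cE y) / 2 + (LK + cE y) * Ln (exp (zE y))))"
            have IE: "isM (2 * of_real (pi^2)) E" unfolding E_def by (intro isM_add isM_diff GN GW GS GE)
            obtain pN :: int where pN: "Ln (exp (zN y)) = zN y - of_int pN * ?T" using Ln_exp_int by blast
            obtain pW :: int where pW: "Ln (exp (zW y)) = zW y - of_int pW * ?T" using Ln_exp_int by blast
            obtain pS :: int where pS: "Ln (exp (zS y)) = zS y - of_int pS * ?T" using Ln_exp_int by blast
            obtain pE :: int where pE: "Ln (exp (zE y)) = zE y - of_int pE * ?T" using Ln_exp_int by blast
            have "sl y = (zN y - zW y + zS y - zE y) - of_int (pN - pW + pS - pE) * ?T"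
              unfolding sl_def pN pW pS pE by (simp add: algebra_simps)
            then have slm: "sl y = - (of_int (pN - pW + pS - pE) * ?T)" using sum0[of y] by simp
            have "cmod (sl y) < 2 * pi" using elim y by (simp add: dist_norm)
            then have "cmod (of_int (pN - pW + pS - pE) * ?T) < 2 * pi" unfolding slm by simp
            then have "pN - pW + pS - pE = 0" by (rule int_small)
            then have sl0: "sl y = 0" using slm by simp
            have Veq: "V y = - \<i> * of_int e * (lifted_dilog (zN y) (LK + cN y) - lifted_dilog (zW y) (LK + cW y)
               + lifted_dilog (zS y) (LK + cS y) - lifted_dilog (zE y) (LK + cE y))"
              using V[OF y] False by (simp add: LK_def)
            have Eeq: "E = (lifted_dilog (zN y) (LK + cN y) - lifted_dilog (zW y) (LK + cW y)
               + lifted_dilog (zS y) (LK + cS y) - lifted_dilog (zE y) (LK + cE y))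
               - A y - LK * sl y + LK / 2 * (zN y - zW y + zS y - zE y)"
              unfolding E_def A_def sl_def by (simp add: field_simps)
            have "V y - - \<i> * of_int e * A y = - \<i> * of_int e * E"
              unfolding Veq Eeq sl0 sum0 by (simp add: algebra_simps)
            then show ?thesis using isM_rot[OF IE, of e] by simp
          qed
        qed
      qed
    qed
  qed
qed

lemma cont_p1: "continuous (at x within S) (\<lambda>p::('j::finite \<Rightarrow> complex) \<times> ('s::finite \<Rightarrow> complex) \<times> ('r::finite \<Rightarrow> complex). fst p j)"
proof -
  have "continuous_on UNIV (\<lambda>p::('j::finite \<Rightarrow> complex) \<times> ('s::finite \<Rightarrow> complex) \<times> ('r::finite \<Rightarrow> complex). fst p j)"
    by (rule continuous_on_compose2[OF continuous_on_product_coordinates continuous_on_fst]) (auto intro: continuous_on_id)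
  then show ?thesis by (meson continuous_at_imp_continuous_at_within continuous_on_eq_continuous_at open_UNIV UNIV_I)
qed
lemma cont_p2: "continuous (at x within S) (\<lambda>p::('j::finite \<Rightarrow> complex) \<times> ('s::finite \<Rightarrow> complex) \<times> ('r::finite \<Rightarrow> complex). fst (snd p) k)"
proof -
  have "continuous_on UNIV (\<lambda>p::('j::finite \<Rightarrow> complex) \<times> ('s::finite \<Rightarrow> complex) \<times> ('r::finite \<Rightarrow> complex). fst (snd p) k)"
    by (rule continuous_on_compose2[OF continuous_on_product_coordinates continuous_on_fst]) (auto intro: continuous_intros)
  then show ?thesis by (meson continuous_at_imp_continuous_at_within continuous_on_eq_continuous_at open_UNIV UNIV_I)
qed
lemma cont_p3: "continuous (at x within S) (\<lambda>p::('j::finite \<Rightarrow> complex) \<times> ('s::finite \<Rightarrow> complex) \<times> ('r::finite \<Rightarrow> complex). snd (snd p) r)"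
proof -
  have "continuous_on UNIV (\<lambda>p::('j::finite \<Rightarrow> complex) \<times> ('s::finite \<Rightarrow> complex) \<times> ('r::finite \<Rightarrow> complex). snd (snd p) r)"
    by (rule continuous_on_compose2[OF continuous_on_product_coordinates continuous_on_snd]) (auto intro: continuous_intros)
  then show ?thesis by (meson continuous_at_imp_continuous_at_within continuous_on_eq_continuous_at open_UNIV UNIV_I)
qed

lemma alg_pos:
  fixes m1 m2 a1 a2 a2' b1 b2 b1' b2' A Q :: complex
  assumes nz: "m1 \<noteq> 0" "m2 \<noteq> 0" "a1 \<noteq> 0" "a2 \<noteq> 0" "b1 \<noteq> 0" "b2 \<noteq> 0"
    and A: "A = 1 - m1 * b1 / b2 * (1 - a1 / m1) * (1 - 1 / (m2 * a2))"
    and Q: "Q = 1 - m2 * a2 * (1 - b2 / (m1 * b1))" and Q0: "Q \<noteq> 0"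
    and ha2: "a2' = a2 * A" and hb1: "b1' = m2 * b2 / m1 / Q"
    and hb2: "b2' = b1 * (1 - m1 / a1 * (1 - b2 / (m1 * b1)))"
  shows "1 - b2 / (b1 * m1) = (1 - b2' / b1) * (a1 / m1)"
    "1 - b2 * m2 / (b1' * m1) = (1 - b2' / b1) * (a1 * a2 * m2 / m1)"
    "1 - b2' * m2 / b1' = (1 - b2' / b1) * (a2' * m2)"
proof -
  show "1 - b2 / (b1 * m1) = (1 - b2' / b1) * (a1 / m1)"
    unfolding hb2 using nz by (simp add: field_simps)
  show "1 - b2 * m2 / (b1' * m1) = (1 - b2' / b1) * (a1 * a2 * m2 / m1)"
    unfolding hb2 hb1 Q using nz Q0[unfolded Q] by (simp add: field_simps)
  show "1 - b2' * m2 / b1' = (1 - b2' / b1) * (a2' * m2)"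
    unfolding hb2 hb1 ha2 A Q using nz Q0[unfolded Q] by (simp add: field_simps)
qed

lemma alg_neg:
  fixes m1 m2 a1 a2 a2' b1 b2 b1' b2' A Q :: complex
  assumes nz: "m1 \<noteq> 0" "m2 \<noteq> 0" "a1 \<noteq> 0" "a2 \<noteq> 0" "b1 \<noteq> 0" "b2 \<noteq> 0"
    and A: "A = 1 - b2 / (m1 * b1) * (1 - m1 * a1) * (1 - m2 / a2)"
    and Q: "Q = 1 - 1 / (m1 * a1) * (1 - m1 * b1 / b2)" and Q0: "Q \<noteq> 0"
    and ha2: "a2' = a2 * A" and hb1: "b1' = m2 * b2 / m1 * (1 - a2 / m2 * (1 - m1 * b1 / b2))"
    and hb2: "b2' = b1 / Q"
    and b1'0: "b1' \<noteq> 0"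
  shows "1 - b1 * m1 / b2 = (1 - b1 / b2') * (a1 * m1)"
    "1 - b1' * m1 / (b2 * m2) = (1 - b1 / b2') * (a1 * a2 * m1 / m2)"
    "1 - b1' / (b2' * m2) = (1 - b1 / b2') * (a2' / m2)"
proof -
  show "1 - b1 * m1 / b2 = (1 - b1 / b2') * (a1 * m1)"
    unfolding hb2 Q using nz Q0[unfolded Q] by (simp add: field_simps)
  show "1 - b1' * m1 / (b2 * m2) = (1 - b1 / b2') * (a1 * a2 * m1 / m2)"
    unfolding hb2 hb1 Q using nz Q0[unfolded Q] by (simp add: field_simps)
  show "1 - b1' / (b2' * m2) = (1 - b1 / b2') * (a2' / m2)"
    unfolding hb2 hb1 ha2 A Q using nz Q0[unfolded Q] by (simp add: field_simps)
qed

lemma pinch_gen: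
  fixes be1 be2 be1' be2' mu1 mu2 gN gS gW gE T E :: complex
  assumes E: "E * E = 1" and T: "T * T = - 4 * of_real (pi^2)"
  shows "2 * of_real (pi^2) * \<i> * (be1 * (gW - gN) - be1' * (gS - gE) + be2 * (gS - gW) - be2' * (gE - gN)
             - mu1 * (E * (be1 - be1' + mu2) + gS - gW)
             - mu2 * (E * (be2' - be2 + mu1) + gE - gS))
   = \<i> * E / 2 * ((T*E*(be2' - be1)) * (-(T*gN)) - (T*E*(be2 - be1 - mu1)) * (T*(-gW + E*mu1))
       + (T*E*(be2 - be1' + mu2 - mu1)) * (T*(-gS + E*(mu1 - mu2))) - (T*E*(be2' - be1' + mu2)) * (T*(-gE - E*mu2)))"
proof -
  have "\<i> * E / 2 * ((T*E*(be2' - be1)) * (-(T*gN)) - (T*E*(be2 - be1 - mu1)) * (T*(-gW + E*mu1))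
       + (T*E*(be2 - be1' + mu2 - mu1)) * (T*(-gS + E*(mu1 - mu2))) - (T*E*(be2' - be1' + mu2)) * (T*(-gE - E*mu2)))
     = \<i> / 2 * (T * T) * ((E*E) * ((be2' - be1) * (-gN) - (be2 - be1 - mu1) * (-gW) + (be2 - be1' + mu2 - mu1) * (-gS) - (be2' - be1' + mu2) * (-gE))
        + (E * E) * E * (- (be2 - be1 - mu1) * mu1 + (be2 - be1' + mu2 - mu1) * (mu1 - mu2) + (be2' - be1' + mu2) * mu2))"
    by (simp add: algebra_simps)
  also have "\<dots> = 2 * of_real (pi^2) * \<i> * (be1 * (gW - gN) - be1' * (gS - gE) + be2 * (gS - gW) - be2' * (gE - gN)
             - mu1 * (E * (be1 - be1' + mu2) + gS - gW)
             - mu2 * (E * (be2' - be2 + mu1) + gE - gS))"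
    unfolding E T by (simp add: algebra_simps)
  finally show ?thesis by simp
qed

lemma shp_nz: "shp_m D p k \<noteq> 0" "shp_b p k \<noteq> 0" "shp_a D p k \<noteq> 0"
  by (simp_all add: shp_m_def shp_b_def shp_a_def e2pi_def)

lemma pos_rel1:
  assumes sh: "shaping_at D p c" and s1: "sgn D c = 1"
  shows "1 - shp_b p (seg2 D c) / (shp_b p (seg1 D c) * shp_m D p (seg1 D c))
           = (1 - shp_b p (seg2' D c) / shp_b p (seg1 D c)) * (shp_a D p (seg1 D c) / shp_m D p (seg1 D c))"
proof -
  have n: "sgn D c \<noteq> 1" if "sgn D c = -1" using that by simp
  show ?thesis
  using sh unfolding shaping_at_def Let_def
  apply (simp only: s1 simp_thms if_True)
  apply (elim conjE)
  apply (rule alg_pos(1)[OF shp_nz(1) shp_nz(1) shp_nz(3) shp_nz(3) shp_nz(2) shp_nz(2) refl refl])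
  apply (assumption | rule refl | rule shp_nz(2))+
  done
qed

lemma pos_rel2:
  assumes sh: "shaping_at D p c" and s1: "sgn D c = 1"
  shows "1 - shp_b p (seg2 D c) * shp_m D p (seg2 D c) / (shp_b p (seg1' D c) * shp_m D p (seg1 D c))
           = (1 - shp_b p (seg2' D c) / shp_b p (seg1 D c)) * (shp_a D p (seg1 D c) * shp_a D p (seg2 D c) * shp_m D p (seg2 D c) / shp_m D p (seg1 D c))"
proof -
  have n: "sgn D c \<noteq> 1" if "sgn D c = -1" using that by simp
  show ?thesis
  using sh unfolding shaping_at_def Let_def
  apply (simp only: s1 simp_thms if_True)
  apply (elim conjE)
  apply (rule alg_pos(2)[OF shp_nz(1) shp_nz(1) shp_nz(3) shp_nz(3) shp_nz(2) shp_nz(2) refl refl])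
  apply (assumption | rule refl | rule shp_nz(2))+
  done
qed

lemma pos_rel3:
  assumes sh: "shaping_at D p c" and s1: "sgn D c = 1"
  shows "1 - shp_b p (seg2' D c) * shp_m D p (seg2 D c) / shp_b p (seg1' D c)
           = (1 - shp_b p (seg2' D c) / shp_b p (seg1 D c)) * (shp_a D p (seg2' D c) * shp_m D p (seg2 D c))"
proof -
  have n: "sgn D c \<noteq> 1" if "sgn D c = -1" using that by simp
  show ?thesis
  using sh unfolding shaping_at_def Let_def
  apply (simp only: s1 simp_thms if_True)
  apply (elim conjE)
  apply (rule alg_pos(3)[OF shp_nz(1) shp_nz(1) shp_nz(3) shp_nz(3) shp_nz(2) shp_nz(2) refl refl])
  apply (assumption | rule refl | rule shp_nz(2))+
  done
qed

lemma neg_rel1: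
  assumes sh: "shaping_at D p c" and s1: "sgn D c = -1"
  shows "1 - shp_b p (seg1 D c) * shp_m D p (seg1 D c) / shp_b p (seg2 D c)
           = (1 - shp_b p (seg1 D c) / shp_b p (seg2' D c)) * (shp_a D p (seg1 D c) * shp_m D p (seg1 D c))"
proof -
  have n: "sgn D c \<noteq> 1" if "sgn D c = -1" using that by simp
  show ?thesis
  using sh shp_nz(2)[of p "seg1' D c"] unfolding shaping_at_def Let_def
  apply (simp only: n[OF s1] if_False)
  apply (elim conjE)
  apply (rule alg_neg(1)[OF shp_nz(1) shp_nz(1) shp_nz(3) shp_nz(3) shp_nz(2) shp_nz(2) refl refl])
  apply (assumption | rule refl | rule shp_nz(2))+
  done
qed

lemma neg_rel2:
  assumes sh: "shaping_at D p c" and s1: "sgn D c = -1"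
  shows "1 - shp_b p (seg1' D c) * shp_m D p (seg1 D c) / (shp_b p (seg2 D c) * shp_m D p (seg2 D c))
           = (1 - shp_b p (seg1 D c) / shp_b p (seg2' D c)) * (shp_a D p (seg1 D c) * shp_a D p (seg2 D c) * shp_m D p (seg1 D c) / shp_m D p (seg2 D c))"
proof -
  have n: "sgn D c \<noteq> 1" if "sgn D c = -1" using that by simp
  show ?thesis
  using sh shp_nz(2)[of p "seg1' D c"] unfolding shaping_at_def Let_def
  apply (simp only: n[OF s1] if_False)
  apply (elim conjE)
  apply (rule alg_neg(2)[OF shp_nz(1) shp_nz(1) shp_nz(3) shp_nz(3) shp_nz(2) shp_nz(2) refl refl])
  apply (assumption | rule refl | rule shp_nz(2))+
  done
qed

lemma neg_rel3:
  assumes sh: "shaping_at D p c" and s1: "sgn D c = -1"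
  shows "1 - shp_b p (seg1' D c) / (shp_b p (seg2' D c) * shp_m D p (seg2 D c))
           = (1 - shp_b p (seg1 D c) / shp_b p (seg2' D c)) * (shp_a D p (seg2' D c) / shp_m D p (seg2 D c))"
proof -
  have n: "sgn D c \<noteq> 1" if "sgn D c = -1" using that by simp
  show ?thesis
  using sh shp_nz(2)[of p "seg1' D c"] unfolding shaping_at_def Let_def
  apply (simp only: n[OF s1] if_False)
  apply (elim conjE)
  apply (rule alg_neg(3)[OF shp_nz(1) shp_nz(1) shp_nz(3) shp_nz(3) shp_nz(2) shp_nz(2) refl refl])
  apply (assumption | rule refl | rule shp_nz(2))+
  done
qed

lemma cross_locmod:
  fixes D :: "('c, 's::finite, 'r::finite, 'j::finite) diagram"
  assumes ld: "link_diagram D" and cD: "c \<in> crossings D" and x: "x \<in> flat_space D"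
  shows "locmod (2 * of_real (pi^2) * \<i>) (flat_space D) (\<lambda>p. crossing_vol D p c) x"
proof -
  have sg: "sgn D c = 1 \<or> sgn D c = -1" and cm1: "comp D (seg1' D c) = comp D (seg1 D c)"
    and cm2: "comp D (seg2' D c) = comp D (seg2 D c)"
    and lr: "lreg D (seg1 D c) = regN D c" "rreg D (seg1 D c) = regW D c"
      "lreg D (seg2 D c) = regW D c" "rreg D (seg2 D c) = regS D c"
      "lreg D (seg1' D c) = regE D c" "rreg D (seg1' D c) = regS D c"
      "lreg D (seg2' D c) = regN D c" "rreg D (seg2' D c) = regE D c"
    using ld cD unfolding link_diagram_def by auto
  define T :: complex where "T = 2 * of_real pi * \<i>"
  define e where "e = sgn D c"
  define E :: complex where "E = of_int e"
  have e2: "e = 1 \<or> e = -1" using sg by (simp add: e_def)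
  have EE: "E * E = 1" using e2 by (auto simp: E_def)
  have T0: "T \<noteq> 0" by (simp add: T_def)
  have TT': "T * T = - 4 * of_real (pi^2)" unfolding T_def by (rule TT)
  define mu1 :: "('j \<Rightarrow> complex) \<times> ('s \<Rightarrow> complex) \<times> ('r \<Rightarrow> complex) \<Rightarrow> complex"
    where "mu1 p = fst p (comp D (seg1 D c))" for p
  define mu2 :: "('j \<Rightarrow> complex) \<times> ('s \<Rightarrow> complex) \<times> ('r \<Rightarrow> complex) \<Rightarrow> complex"
    where "mu2 p = fst p (comp D (seg2 D c))" for p
  define be1 :: "('j \<Rightarrow> complex) \<times> ('s \<Rightarrow> complex) \<times> ('r \<Rightarrow> complex) \<Rightarrow> complex"
    where "be1 p = fst (snd p) (seg1 D c)" for p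
  define be2 :: "('j \<Rightarrow> complex) \<times> ('s \<Rightarrow> complex) \<times> ('r \<Rightarrow> complex) \<Rightarrow> complex"
    where "be2 p = fst (snd p) (seg2 D c)" for p
  define be1' :: "('j \<Rightarrow> complex) \<times> ('s \<Rightarrow> complex) \<times> ('r \<Rightarrow> complex) \<Rightarrow> complex"
    where "be1' p = fst (snd p) (seg1' D c)" for p
  define be2' :: "('j \<Rightarrow> complex) \<times> ('s \<Rightarrow> complex) \<times> ('r \<Rightarrow> complex) \<Rightarrow> complex"
    where "be2' p = fst (snd p) (seg2' D c)" for p
  define gN :: "('j \<Rightarrow> complex) \<times> ('s \<Rightarrow> complex) \<times> ('r \<Rightarrow> complex) \<Rightarrow> complex"
    where "gN p = snd (snd p) (regN D c)" for p
  define gS :: "('j \<Rightarrow> complex) \<times> ('s \<Rightarrow> complex) \<times> ('r \<Rightarrow> complex) \<Rightarrow> complex"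
    where "gS p = snd (snd p) (regS D c)" for p
  define gW :: "('j \<Rightarrow> complex) \<times> ('s \<Rightarrow> complex) \<times> ('r \<Rightarrow> complex) \<Rightarrow> complex"
    where "gW p = snd (snd p) (regW D c)" for p
  define gE :: "('j \<Rightarrow> complex) \<times> ('s \<Rightarrow> complex) \<times> ('r \<Rightarrow> complex) \<Rightarrow> complex"
    where "gE p = snd (snd p) (regE D c)" for p
  define zN where "zN p = T * E * (be2' p - be1 p)" for p
  define zW where "zW p = T * E * (be2 p - be1 p - mu1 p)" for p
  define zS where "zS p = T * E * (be2 p - be1' p + mu2 p - mu1 p)" for p
  define zE where "zE p = T * E * (be2' p - be1' p + mu2 p)" for p
  define th where "th p = T * gN p" for p
  define cN where "cN p = - (T * gN p)" for p
  define cW where "cW p = T * (- gW p + E * mu1 p)" for p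
  define cS where "cS p = T * (- gS p + E * (mu1 p - mu2 p))" for p
  define cE where "cE p = T * (- gE p - E * mu2 p)" for p
  have cvm: "shp_m D p (seg1 D c) = exp (T * mu1 p)" "shp_m D p (seg2 D c) = exp (T * mu2 p)" for p
    by (simp_all add: shp_m_def e2pi_def T_def mu1_def mu2_def)
  have cvb: "shp_b p (seg1 D c) = exp (T * be1 p)" "shp_b p (seg2 D c) = exp (T * be2 p)"
    "shp_b p (seg1' D c) = exp (T * be1' p)" "shp_b p (seg2' D c) = exp (T * be2' p)" for p
    by (simp_all add: shp_b_def e2pi_def T_def be1_def be2_def be1'_def be2'_def)
  have cva: "shp_a D p (seg1 D c) = exp (T * (gW p - gN p))" "shp_a D p (seg2 D c) = exp (T * (gS p - gW p))"
    "shp_a D p (seg2' D c) = exp (T * (gE p - gN p))" for p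
    by (simp_all add: shp_a_def e2pi_def T_def gW_def gN_def gS_def gE_def lr)
  note cv = cvm cvb cva
  have pos_eqs: "exp (zN p) = shp_b p (seg2' D c) / shp_b p (seg1 D c)"
    "exp (zW p) = shp_b p (seg2 D c) / (shp_b p (seg1 D c) * shp_m D p (seg1 D c))"
    "exp (zS p) = shp_b p (seg2 D c) * shp_m D p (seg2 D c) / (shp_b p (seg1' D c) * shp_m D p (seg1 D c))"
    "exp (zE p) = shp_b p (seg2' D c) * shp_m D p (seg2 D c) / shp_b p (seg1' D c)"
    "exp (- cW p - th p) = shp_a D p (seg1 D c) / shp_m D p (seg1 D c)"
    "exp (- cS p - th p) = shp_a D p (seg1 D c) * shp_a D p (seg2 D c) * shp_m D p (seg2 D c) / shp_m D p (seg1 D c)"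
    "exp (- cE p - th p) = shp_a D p (seg2' D c) * shp_m D p (seg2 D c)"
    if e1: "e = 1" for p
    unfolding cv zN_def zW_def zS_def zE_def cW_def cS_def cE_def th_def E_def e1
    by (simp_all add: algebra_simps exp_diff exp_add field_simps)
  have neg_eqs: "exp (zN p) = shp_b p (seg1 D c) / shp_b p (seg2' D c)"
    "exp (zW p) = shp_b p (seg1 D c) * shp_m D p (seg1 D c) / shp_b p (seg2 D c)"
    "exp (zS p) = shp_b p (seg1' D c) * shp_m D p (seg1 D c) / (shp_b p (seg2 D c) * shp_m D p (seg2 D c))"
    "exp (zE p) = shp_b p (seg1' D c) / (shp_b p (seg2' D c) * shp_m D p (seg2 D c))"
    "exp (- cW p - th p) = shp_a D p (seg1 D c) * shp_m D p (seg1 D c)"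
    "exp (- cS p - th p) = shp_a D p (seg1 D c) * shp_a D p (seg2 D c) * shp_m D p (seg1 D c) / shp_m D p (seg2 D c)"
    "exp (- cE p - th p) = shp_a D p (seg2' D c) / shp_m D p (seg2 D c)"
    if e1: "e = -1" for p
    unfolding cv zN_def zW_def zS_def zE_def cW_def cS_def cE_def th_def E_def e1
    by (simp_all add: algebra_simps exp_diff exp_add exp_minus field_simps)
  have sh: "shaping_at D y c" if "y \<in> flat_space D" for y
    using that cD by (simp add: flat_space_def)
  have rW: "1 - exp (zW y) = (1 - exp (zN y)) * exp (- cW y - th y)" if y: "y \<in> flat_space D" for y
  proof (cases "e = 1")
    case True
    then show ?thesis unfolding pos_eqs[OF True] using pos_rel1[OF sh[OF y]] True by (simp add: e_def)
  next
    case False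
    then have e1: "e = -1" using e2 by simp
    then show ?thesis unfolding neg_eqs[OF e1] using neg_rel1[OF sh[OF y]] e1 by (simp add: e_def)
  qed
  have rS: "1 - exp (zS y) = (1 - exp (zN y)) * exp (- cS y - th y)" if y: "y \<in> flat_space D" for y
  proof (cases "e = 1")
    case True
    then show ?thesis unfolding pos_eqs[OF True] using pos_rel2[OF sh[OF y]] True by (simp add: e_def)
  next
    case False
    then have e1: "e = -1" using e2 by simp
    then show ?thesis unfolding neg_eqs[OF e1] using neg_rel2[OF sh[OF y]] e1 by (simp add: e_def)
  qed
  have rE: "1 - exp (zE y) = (1 - exp (zN y)) * exp (- cE y - th y)" if y: "y \<in> flat_space D" for y
  proof (cases "e = 1")
    case True
    then show ?thesis unfolding pos_eqs[OF True] using pos_rel3[OF sh[OF y]] True by (simp add: e_def)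
  next
    case False
    then have e1: "e = -1" using e2 by simp
    then show ?thesis unfolding neg_eqs[OF e1] using neg_rel3[OF sh[OF y]] e1 by (simp add: e_def)
  qed
  have pin: "pinched D p c \<longleftrightarrow> exp (zN p) = 1" for p
  proof (cases "e = 1")
    case True
    show ?thesis unfolding pos_eqs[OF True] pinched_def using shp_nz(2)[of p "seg1 D c"] by auto
  next
    case False
    then have e1: "e = -1" using e2 by simp
    show ?thesis unfolding neg_eqs[OF e1] pinched_def using shp_nz(2)[of p "seg2' D c"] by auto
  qed
  have Kq: "e2pi (gN p) / (1 - (shp_b p (seg2' D c) / shp_b p (seg1 D c)) powi e) = exp (th p) / (1 - exp (zN p))" for p
  proof -
    have "e2pi (gN p) = exp (th p)" by (simp add: e2pi_def th_def T_def)
    moreover have "(shp_b p (seg2' D c) / shp_b p (seg1 D c)) powi e = exp (zN p)"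
    proof (cases "e = 1")
      case True then show ?thesis unfolding pos_eqs[OF True] by simp
    next
      case False
      then have e1: "e = -1" using e2 by simp
      then show ?thesis unfolding neg_eqs[OF e1] by (simp add: power_int_minus)
    qed
    ultimately show ?thesis by simp
  qed
  define Kx where "Kx p = e2pi (gN p) / (1 - (shp_b p (seg2' D c) / shp_b p (seg1 D c)) powi e)" for p
  have cv0: "crossing_vol D p c = (if pinched D p c then
      2 * of_real (pi^2) * \<i> * (be1 p * (gW p - gN p) - be1' p * (gS p - gE p) + be2 p * (gS p - gW p) - be2' p * (gE p - gN p)
             - mu1 p * (E * (be1 p - be1' p + mu2 p) + gS p - gW p)
             - mu2 p * (E * (be2' p - be2 p + mu1 p) + gE p - gS p))
    else - \<i> * E *
      (lifted_dilog (T * E * (be2' p - be1 p)) (T * (Ln (Kx p) / T - gN p))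
     - lifted_dilog (T * E * (be2 p - be1 p - mu1 p)) (T * (Ln (Kx p) / T - gW p + E * mu1 p))
     + lifted_dilog (T * E * (be2 p - be1' p + mu2 p - mu1 p)) (T * (Ln (Kx p) / T - gS p + E * (mu1 p - mu2 p)))
     - lifted_dilog (T * E * (be2' p - be1' p + mu2 p)) (T * (Ln (Kx p) / T - gE p - E * mu2 p))))" for p
    unfolding crossing_vol_def Let_def mu1_def mu2_def be1_def be2_def be1'_def be2'_def gN_def gS_def gW_def gE_def
      E_def e_def T_def Kx_def by (rule refl)
  have V: "crossing_vol D p c = (if exp (zN p) = 1
         then \<i> * of_int e / 2 * (zN p * cN p - zW p * cW p + zS p * cS p - zE p * cE p)
         else - \<i> * of_int e *
           (lifted_dilog (zN p) (Ln (exp (th p) / (1 - exp (zN p))) + cN p)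
          - lifted_dilog (zW p) (Ln (exp (th p) / (1 - exp (zN p))) + cW p)
          + lifted_dilog (zS p) (Ln (exp (th p) / (1 - exp (zN p))) + cS p)
          - lifted_dilog (zE p) (Ln (exp (th p) / (1 - exp (zN p))) + cE p)))" for p
  proof -
    have pg: "2 * of_real (pi^2) * \<i> * (be1 p * (gW p - gN p) - be1' p * (gS p - gE p) + be2 p * (gS p - gW p) - be2' p * (gE p - gN p)
             - mu1 p * (E * (be1 p - be1' p + mu2 p) + gS p - gW p)
             - mu2 p * (E * (be2' p - be2 p + mu1 p) + gE p - gS p))
        = \<i> * of_int e / 2 * (zN p * cN p - zW p * cW p + zS p * cS p - zE p * cE p)"
      unfolding zN_def zW_def zS_def zE_def cN_def cW_def cS_def cE_def E_def[symmetric]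
      by (rule pinch_gen[OF EE TT'])
    have KK: "Kx p = exp (th p) / (1 - exp (zN p))" unfolding Kx_def by (rule Kq)
    have a1: "T * (Ln (Kx p) / T - gN p) = Ln (exp (th p) / (1 - exp (zN p))) + cN p"
      unfolding KK cN_def using T0 by (simp add: field_simps)
    have a2: "T * (Ln (Kx p) / T - gW p + E * mu1 p) = Ln (exp (th p) / (1 - exp (zN p))) + cW p"
      unfolding KK cW_def using T0 by (simp add: field_simps)
    have a3: "T * (Ln (Kx p) / T - gS p + E * (mu1 p - mu2 p)) = Ln (exp (th p) / (1 - exp (zN p))) + cS p"
      unfolding KK cS_def using T0 by (simp add: field_simps)
    have a4: "T * (Ln (Kx p) / T - gE p - E * mu2 p) = Ln (exp (th p) / (1 - exp (zN p))) + cE p"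
      unfolding KK cE_def using T0 by (simp add: field_simps)
    show ?thesis
      apply (unfold cv0 pin pg a1 a2 a3 a4)
      apply (unfold zN_def[symmetric] zW_def[symmetric] zS_def[symmetric] zE_def[symmetric])
      apply (unfold E_def)
      apply (rule refl)
      done
  qed
  have cmu1: "continuous (at x within flat_space D) mu1" unfolding mu1_def by (rule cont_p1)
  have cmu2: "continuous (at x within flat_space D) mu2" unfolding mu2_def by (rule cont_p1)
  have cbe: "continuous (at x within flat_space D) be1" "continuous (at x within flat_space D) be2"
    "continuous (at x within flat_space D) be1'" "continuous (at x within flat_space D) be2'"
    unfolding be1_def be2_def be1'_def be2'_def by (rule cont_p2)+
  have cg: "continuous (at x within flat_space D) gN" "continuous (at x within flat_space D) gS"
    "continuous (at x within flat_space D) gW" "continuous (at x within flat_space D) gE"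
    unfolding gN_def gS_def gW_def gE_def by (rule cont_p3)+
  show ?thesis
  proof (rule CORE[where zN=zN and zW=zW and zS=zS and zE=zE and cN=cN and cW=cW and cS=cS and cE=cE and th=th and e=e])
    show "x \<in> flat_space D" by (rule x)
    show "continuous (at x within flat_space D) zN" unfolding zN_def by (intro continuous_intros cmu1 cmu2 cbe cg)
    show "continuous (at x within flat_space D) zW" unfolding zW_def by (intro continuous_intros cmu1 cmu2 cbe cg)
    show "continuous (at x within flat_space D) zS" unfolding zS_def by (intro continuous_intros cmu1 cmu2 cbe cg)
    show "continuous (at x within flat_space D) zE" unfolding zE_def by (intro continuous_intros cmu1 cmu2 cbe cg)
    show "continuous (at x within flat_space D) cN" unfolding cN_def by (intro continuous_intros cmu1 cmu2 cbe cg)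
    show "continuous (at x within flat_space D) cW" unfolding cW_def by (intro continuous_intros cmu1 cmu2 cbe cg)
    show "continuous (at x within flat_space D) cS" unfolding cS_def by (intro continuous_intros cmu1 cmu2 cbe cg)
    show "continuous (at x within flat_space D) cE" unfolding cE_def by (intro continuous_intros cmu1 cmu2 cbe cg)
    show "continuous (at x within flat_space D) th" unfolding th_def by (intro continuous_intros cmu1 cmu2 cbe cg)
    show "\<And>y. zN y - zW y + zS y - zE y = 0"
      unfolding zN_def zW_def zS_def zE_def by (simp add: algebra_simps)
    show "\<And>y. y \<in> flat_space D \<Longrightarrow> cN y = - th y" by (simp add: cN_def th_def)
    show "\<And>y. y \<in> flat_space D \<Longrightarrow> 1 - exp (zW y) = (1 - exp (zN y)) * exp (- cW y - th y)" by (rule rW)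
    show "\<And>y. y \<in> flat_space D \<Longrightarrow> 1 - exp (zS y) = (1 - exp (zN y)) * exp (- cS y - th y)" by (rule rS)
    show "\<And>y. y \<in> flat_space D \<Longrightarrow> 1 - exp (zE y) = (1 - exp (zN y)) * exp (- cE y - th y)" by (rule rE)
  qed (rule V)
qed

theorem lemma3p6:
  fixes D :: "('c, 's::finite, 'r::finite, 'j::finite) diagram"
  assumes "link_diagram D"
  shows "continuous_mod_on (2 * of_real (pi^2) * \<i>) (flat_space D) (diagram_vol D)"
proof (rule locmod_cont)
  fix x assume x: "x \<in> flat_space D"
  have fin: "finite (crossings D)" using assms by (simp add: link_diagram_def)
  have "locmod (2 * of_real (pi^2) * \<i>) (flat_space D) (\<lambda>p. \<Sum>c\<in>crossings D. crossing_vol D p c) x"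
    by (rule locmod_sum[OF fin]) (rule cross_locmod[OF assms _ x])
  then show "locmod (2 * of_real (pi^2) * \<i>) (flat_space D) (diagram_vol D) x"
    unfolding diagram_vol_def[abs_def] .
qed

end
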